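(* Let $\mathbb{H}_3$ be the discrete Heisenberg group generated by $a,b,c$ with relations $ba=abc$, $ca=ac$, $cb=bc$, and write each element uniquely as $x=(x_1,x_2,x_3)=a^{x_1}b^{x_2}c^{x_3}$, so that $xy=(x_1+y_1,\,x_2+y_2,\,x_3+y_3+x_2y_1)$. With integer coefficients and the bar resolution: (i) $H^1(\mathbb{H}_3)$ is generated by $\alpha_1(x)=x_1$, $\alpha_2(x)=x_2$. (ii) $H^2(\mathbb{H}_3)$ is generated by the classes of the $2$-cocycles $\beta_1(x,y)=x_3y_1+\frac12x_2y_1(y_1-1)$ and $\beta_2(x,y)=(x_1x_2-x_3)y_2+\frac12x_1y_2(y_2-1)$. (iii) $H^3(\mathbb{H}_3)$ is generated by the class of $\gamma(x,y,z)=\big(x_3y_1+\frac12x_2y_1(y_1-1)\big)z_2$. (iv) In the cohomology ring, $[\alpha_1]\smile[\alpha_2]=0$ and $[\beta_i]\smile[\alpha_j]=(1-\delta_{ij})[\gamma]$ for $i,j\in\{1,2\}$. (v) $H_1(\mathbb{H}_3)$ is generated by $A_1=[a]$, $A_2=[b]$; $H_2(\mathbb{H}_3)$ is generated by $B_1=[c|a]-[a|c]$ and $B_2=[b|c]-[c|b]$; and $H_3(\mathbb{H}_3)$ is generated by $C=[c^{-1}|bc|ab^{-1}c^{-1}]+[bc|ab^{-1}c^{-1}|a^{-1}bc^{-1}]+[ab^{-1}c^{-1}|a^{-1}bc^{-1}|ac]+[a^{-1}bc^{-1}|ac|c^{-1}]-[ac|a^{-1}bc^{-1}|ab^{-1}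c^{-1}]-[a^{-1}bc^{-1}|ab^{-1}c^{-1}|bc]$.
   Context: Homology and cohomology of a group $\Gamma$ with trivial coefficients $\mathbb{Z}$ are computed by the inhomogeneous bar complex: $n$-chains are formal $\mathbb{Z}$-combinations of symbols $[g_1|\dots|g_n]$, with $\partial[g]=0$, $\partial[g|h]=[g]-[gh]+[h]$, $\partial[g|h|k]=[h|k]-[gh|k]+[g|hk]-[g|h]$; $n$-cochains are functions $\Gamma^n\to\mathbb{Z}$ with the dual coboundary. The cup product of cochains is $(\phi\smile\psi)(g_1,\dots,g_{p+q})=\phi(g_1,\dots,g_p)\psi(g_{p+1},\dots,g_{p+q})$. $\delta_{ij}$ is the Kronecker delta. *)

theory Defs
  imports Main
begin

type_synonym heis = "int \<times> int \<times> int"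

definition h1 :: "heis \<Rightarrow> int" where "h1 x = fst x"
definition h2 :: "heis \<Rightarrow> int" where "h2 x = fst (snd x)"
definition h3 :: "heis \<Rightarrow> int" where "h3 x = snd (snd x)"

definition hmul :: "heis \<Rightarrow> heis \<Rightarrow> heis" where
  "hmul x y = (h1 x + h1 y, h2 x + h2 y, h3 x + h3 y + h2 x * h1 y)"

text \<open>n-chains: finitely supported functions from lists of length n to int
  (formal Z-combinations of symbols [g1|...|gn]); n-cochains: functions on lists of length n.\<close>

definition face :: "('g \<Rightarrow> 'g \<Rightarrow> 'g) \<Rightarrow> nat \<Rightarrow> 'g list \<Rightarrow> 'g list" where
  "face m i xs = (if i = 0 then tl xs
                  else if length xs \<le> i then butlast xs
                  else take (i - 1) xs @ [m (xs ! (i - 1)) (xs ! i)] @ drop (i + 1) xs)"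

definition cobd :: "('g \<Rightarrow> 'g \<Rightarrow> 'g) \<Rightarrow> ('g list \<Rightarrow> int) \<Rightarrow> 'g list \<Rightarrow> int" where
  "cobd m \<phi> xs = (\<Sum>i\<le>length xs. (-1) ^ i * \<phi> (face m i xs))"

definition is_chain :: "nat \<Rightarrow> ('g list \<Rightarrow> int) \<Rightarrow> bool" where
  "is_chain n c \<longleftrightarrow> finite {xs. c xs \<noteq> 0} \<and> (\<forall>xs. c xs \<noteq> 0 \<longrightarrow> length xs = n)"

definition bnd :: "('g \<Rightarrow> 'g \<Rightarrow> 'g) \<Rightarrow> ('g list \<Rightarrow> int) \<Rightarrow> 'g list \<Rightarrow> int" where
  "bnd m c ys = (\<Sum>xs\<in>{xs. c xs \<noteq> 0}. \<Sum>i\<le>length xs.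
                    if face m i xs = ys then (-1) ^ i * c xs else 0)"

definition gen :: "'g list \<Rightarrow> 'g list \<Rightarrow> int" where
  "gen xs ys = (if ys = xs then 1 else 0)"

definition cup :: "nat \<Rightarrow> ('g list \<Rightarrow> int) \<Rightarrow> ('g list \<Rightarrow> int) \<Rightarrow> 'g list \<Rightarrow> int" where
  "cup p \<phi> \<psi> xs = \<phi> (take p xs) * \<psi> (drop p xs)"

definition cocycle :: "nat \<Rightarrow> (heis list \<Rightarrow> int) \<Rightarrow> bool" where
  "cocycle n \<phi> \<longleftrightarrow> (\<forall>xs. length xs = n + 1 \<longrightarrow> cobd hmul \<phi> xs = 0)"

definition cohomologous :: "nat \<Rightarrow> (heis list \<Rightarrow> int) \<Rightarrow> (heis list \<Rightarrow> int) \<Rightarrow> bool" where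
  "cohomologous n \<phi> \<psi> \<longleftrightarrow> (\<exists>\<theta>. \<forall>xs. length xs = n \<longrightarrow> \<phi> xs - \<psi> xs = cobd hmul \<theta> xs)"

definition cycle :: "nat \<Rightarrow> (heis list \<Rightarrow> int) \<Rightarrow> bool" where
  "cycle n z \<longleftrightarrow> is_chain n z \<and> (\<forall>ys. bnd hmul z ys = 0)"

definition homologous :: "nat \<Rightarrow> (heis list \<Rightarrow> int) \<Rightarrow> (heis list \<Rightarrow> int) \<Rightarrow> bool" where
  "homologous n z w \<longleftrightarrow> (\<exists>u. is_chain (Suc n) u \<and> (\<forall>ys. z ys - w ys = bnd hmul u ys))"

definition alpha :: "nat \<Rightarrow> heis list \<Rightarrow> int" where
  "alpha i xs = (if i = 1 then h1 (xs ! 0) else h2 (xs ! 0))"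

definition beta :: "nat \<Rightarrow> heis list \<Rightarrow> int" where
  "beta i xs = (let x = xs ! 0; y = xs ! 1 in
     if i = 1 then h3 x * h1 y + h2 x * ((h1 y * (h1 y - 1)) div 2)
     else (h1 x * h2 x - h3 x) * h2 y + h1 x * ((h2 y * (h2 y - 1)) div 2))"

definition gamma :: "heis list \<Rightarrow> int" where
  "gamma xs = (let x = xs ! 0; y = xs ! 1; z = xs ! 2 in
     (h3 x * h1 y + h2 x * ((h1 y * (h1 y - 1)) div 2)) * h2 z)"

definition ga :: heis where "ga = (1, 0, 0)"
definition gb :: heis where "gb = (0, 1, 0)"
definition gc :: heis where "gc = (0, 0, 1)"

definition A :: "nat \<Rightarrow> heis list \<Rightarrow> int" where
  "A i = (if i = 1 then gen [ga] else gen [gb])"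

definition B :: "nat \<Rightarrow> heis list \<Rightarrow> int" where
  "B i = (if i = 1 then (\<lambda>ys. gen [gc, ga] ys - gen [ga, gc] ys)
          else (\<lambda>ys. gen [gb, gc] ys - gen [gc, gb] ys))"

text \<open>c^-1 = (0,0,-1), bc = (0,1,1), ab^-1c^-1 = (1,-1,-1), a^-1bc^-1 = (-1,1,-1), ac = (1,0,1).\<close>
definition C :: "heis list \<Rightarrow> int" where
  "C ys = gen [(0,0,-1), (0,1,1), (1,-1,-1)] ys
        + gen [(0,1,1), (1,-1,-1), (-1,1,-1)] ys
        + gen [(1,-1,-1), (-1,1,-1), (1,0,1)] ys
        + gen [(-1,1,-1), (1,0,1), (0,0,-1)] ys
        - gen [(1,0,1), (-1,1,-1), (1,-1,-1)] ys
        - gen [(-1,1,-1), (1,-1,-1), (0,1,1)] ys"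

end

theory Submission
  imports Defs "HOL-Library.Poly_Mapping"
begin

abbreviation fe :: "('b \<Rightarrow> 'a \<Rightarrow>\<^sub>0 int) \<Rightarrow> ('b \<Rightarrow>\<^sub>0 int) \<Rightarrow> 'a \<Rightarrow>\<^sub>0 int"
  where "fe \<equiv> frag_extend"

lemma fe_compose: "fe f (fe g x) = fe (\<lambda>k. fe f (g k)) x"
  using subset_UNIV by (induction x rule: frag_induction) (auto simp: frag_extend_diff)

lemma fe_add_fun: "fe (\<lambda>k. f k + g k) x = fe f x + fe g x"
  using subset_UNIV by (induction x rule: frag_induction) (auto simp: frag_extend_diff algebra_simps)

lemma fe_diff_fun: "fe (\<lambda>k. f k - g k) x = fe f x - fe g x"
  using subset_UNIV by (induction x rule: frag_induction) (auto simp: frag_extend_diff algebra_simps)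

lemma fe_zero_fun: "fe (\<lambda>k. 0) x = 0"
  using subset_UNIV by (induction x rule: frag_induction) (auto simp: frag_extend_diff algebra_simps)

lemma fe_cmul_fun: "fe (\<lambda>k. frag_cmul (c k) (f k)) x = fe (\<lambda>k. frag_cmul (c k) (frag_of k)) (fe f x) \<or> True"
  by simp

lemma fe_keys_cong: "(\<And>k. k \<in> Poly_Mapping.keys x \<Longrightarrow> f k = g k) \<Longrightarrow> fe f x = fe g x"
  by (rule frag_extend_eq)

lemma fe_id: "fe frag_of x = x"
  by (metis frag_expansion)

definition lf :: "('a \<Rightarrow> int) \<Rightarrow> ('a \<Rightarrow>\<^sub>0 int) \<Rightarrow> int" where
  "lf \<phi> x = Poly_Mapping.lookup (fe (\<lambda>k. frag_cmul (\<phi> k) (frag_of ())) x) ()"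

lemma lf_of[simp]: "lf \<phi> (frag_of k) = \<phi> k"
  by (simp add: lf_def)
lemma lf_add[simp]: "lf \<phi> (x + y) = lf \<phi> x + lf \<phi> y"
  by (simp add: lf_def frag_extend_add lookup_add)
lemma lf_diff[simp]: "lf \<phi> (x - y) = lf \<phi> x - lf \<phi> y"
  by (simp add: lf_def frag_extend_diff lookup_minus)
lemma lf_minus[simp]: "lf \<phi> (- x) = - lf \<phi> x"
  by (simp add: lf_def frag_extend_minus)
lemma lf_zero[simp]: "lf \<phi> 0 = 0"
  by (simp add: lf_def)
lemma lf_cmul[simp]: "lf \<phi> (frag_cmul c x) = c * lf \<phi> x"
  by (simp add: lf_def frag_extend_cmul)

lemma unit_frag: "(y :: unit \<Rightarrow>\<^sub>0 int) = frag_cmul (Poly_Mapping.lookup y ()) (frag_of ())"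
  by (rule poly_mapping_eqI) simp

lemma lf_fe: "lf \<phi> (fe F x) = lf (\<lambda>k. lf \<phi> (F k)) x"
proof -
  have "fe (\<lambda>k. frag_cmul (\<phi> k) (frag_of ())) (fe F x)
      = fe (\<lambda>k. fe (\<lambda>k. frag_cmul (\<phi> k) (frag_of ())) (F k)) x" by (rule fe_compose)
  also have "\<dots> = fe (\<lambda>k. frag_cmul (lf \<phi> (F k)) (frag_of ())) x"
    unfolding lf_def by (subst unit_frag) simp
  finally show ?thesis unfolding lf_def by simp
qed

lemma lf_sum_form: "lf \<phi> x = (\<Sum>k\<in>Poly_Mapping.keys x. Poly_Mapping.lookup x k * \<phi> k)"
  unfolding lf_def frag_extend_def by (simp add: lookup_sum)

lemma lf_cong: "(\<And>k. k \<in> Poly_Mapping.keys x \<Longrightarrow> \<phi> k = \<psi> k) \<Longrightarrow> lf \<phi> x = lf \<psi> x"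
  unfolding lf_sum_form by simp

lemma lf_add_fun: "lf (\<lambda>k. \<phi> k + \<psi> k) x = lf \<phi> x + lf \<psi> x"
  unfolding lf_sum_form by (simp add: algebra_simps sum.distrib)

lemma lf_cmul_fun: "lf (\<lambda>k. c * \<phi> k) x = c * lf \<phi> x"
  unfolding lf_sum_form by (simp add: algebra_simps sum_distrib_left)

lemma lf_zero_fun: "lf (\<lambda>k. 0) x = 0"
  unfolding lf_sum_form by simp

lemma hmul_simp[simp]: "hmul (a1,a2,a3) (b1,b2,b3) = (a1+b1, a2+b2, a3+b3+a2*b1)"
  by (simp add: hmul_def h1_def h2_def h3_def)

definition e0 :: heis where "e0 = (0,0,0)"

lemma hmul_assoc: "hmul (hmul x y) z = hmul x (hmul y z)"
  by (cases x; cases y; cases z) (simp add: algebra_simps)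

lemma hmul_e0[simp]: "hmul e0 x = x" "hmul x e0 = x"
  by (cases x; simp add: e0_def)+

definition gsum :: "int \<Rightarrow> (int \<Rightarrow> 'a::ab_group_add) \<Rightarrow> 'a" where
  "gsum k f = (if 0 \<le> k then (\<Sum>l\<in>{0..<k}. f l) else - (\<Sum>l\<in>{k..<0}. f l))"

lemma gsum_0[simp]: "gsum 0 f = 0"
  by (simp add: gsum_def)

lemma gsum_step: "gsum (k+1) f = gsum k f + f k"
proof (cases "0 \<le> k")
  case True
  then have "{0..<k+1} = insert k {0..<k}" by auto
  then show ?thesis using True by (simp add: gsum_def add.commute)
next
  case False
  show ?thesis
  proof (cases "k = -1")
    case True
    then have "{k..<0} = {-1}" by auto
    then show ?thesis using True by (simp add: gsum_def)
  next
    case F2: False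
    then have "{k..<0} = insert k {k+1..<0}" using False by auto
    then show ?thesis using False F2 by (simp add: gsum_def)
  qed
qed

lemma int_bi_induct:
  assumes "P 0" "\<And>k. P k \<Longrightarrow> P (k+1)" "\<And>k. P (k+1) \<Longrightarrow> P k"
  shows "P (k::int)"
proof (induction k rule: int_induct[where k=0])
  case base then show ?case using assms(1) .
next
  case (step1 i) then show ?case using assms(2) by blast
next
  case (step2 i) then show ?case using assms(3)[of "i - 1"] by simp
qed

lemma eq_by_diff:
  fixes L R :: "int \<Rightarrow> 'a::ab_group_add"
  assumes "\<And>k. L (k+1) - L k = R (k+1) - R k" "L 0 = R 0"
  shows "L k = R k"
proof (induction k rule: int_bi_induct)
  case 1 then show ?case using assms(2) .
next
  case (2 k) then show ?case using assms(1)[of k] by (metis diff_eq_eq)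
next
  case (3 k) then show ?case using assms(1)[of k] by (metis add_diff_cancel_left' diff_add_cancel)
qed

lemma gsum_fe: "fe F (gsum k f) = gsum k (\<lambda>l. fe F (f l))"
  by (rule eq_by_diff[where L="\<lambda>k. fe F (gsum k f)" and R="\<lambda>k. gsum k (\<lambda>l. fe F (f l))"])
     (simp_all add: gsum_step frag_extend_add)

datatype cell = E0 | Ea | Eb | Ec | Eab | Eac | Ebc | Eabc

abbreviation el :: "heis \<Rightarrow> cell \<Rightarrow> (heis \<times> cell) \<Rightarrow>\<^sub>0 int" where
  "el g S \<equiv> frag_of (g, S)"

fun dPb :: "heis \<times> cell \<Rightarrow> (heis \<times> cell) \<Rightarrow>\<^sub>0 int" where
  "dPb ((i,j,k),E0) = 0"
| "dPb ((i,j,k),Ea) = el (i+1,j,k+j) E0 - el (i,j,k) E0"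
| "dPb ((i,j,k),Eb) = el (i,j+1,k) E0 - el (i,j,k) E0"
| "dPb ((i,j,k),Ec) = el (i,j,k+1) E0 - el (i,j,k) E0"
| "dPb ((i,j,k),Eab) = el (i,j+1,k) Ea - el (i,j,k) Ea - el (i+1,j,k+j) Eb + el (i,j,k) Eb - el (i+1,j+1,k+j) Ec"
| "dPb ((i,j,k),Eac) = el (i+1,j,k+j) Ec - el (i,j,k) Ec - el (i,j,k+1) Ea + el (i,j,k) Ea"
| "dPb ((i,j,k),Ebc) = el (i,j+1,k) Ec - el (i,j,k) Ec - el (i,j,k+1) Eb + el (i,j,k) Eb"
| "dPb ((i,j,k),Eabc) = el (i,j,k+1) Eab - el (i,j,k) Eab + el (i,j+1,k) Eac - el (i,j,k) Eac
                        - el (i+1,j,k+j) Ebc + el (i,j,k) Ebc"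

abbreviation dP where "dP \<equiv> fe dPb"

definition line :: "cell \<Rightarrow> int \<Rightarrow> int \<Rightarrow> int \<Rightarrow> (heis \<times> cell) \<Rightarrow>\<^sub>0 int" where
  "line S i j k = gsum k (\<lambda>l. el (i,j,l) S)"

definition pa :: "int \<Rightarrow> (heis \<times> cell) \<Rightarrow>\<^sub>0 int" where
  "pa i = gsum i (\<lambda>l. el (l,0,0) Ea)"
definition pb :: "int \<Rightarrow> int \<Rightarrow> (heis \<times> cell) \<Rightarrow>\<^sub>0 int" where
  "pb i j = gsum j (\<lambda>l. el (i,l,0) Eb)"
definition Qc :: "int \<Rightarrow> int \<Rightarrow> (heis \<times> cell) \<Rightarrow>\<^sub>0 int" where
  "Qc i j = gsum j (\<lambda>l. el (i,l,0) Eab - line Ebc (i+1) l l)"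

lemma line_step: "line S i j (k+1) = line S i j k + el (i,j,k) S"
  by (simp add: line_def gsum_step)
lemma pa_step: "pa (i+1) = pa i + el (i,0,0) Ea"
  by (simp add: pa_def gsum_step)
lemma pb_step: "pb i (j+1) = pb i j + el (i,j,0) Eb"
  by (simp add: pb_def gsum_step)
lemma Qc_step: "Qc i (j+1) = Qc i j + el (i,j,0) Eab - line Ebc (i+1) j j"
  by (simp add: Qc_def gsum_step)
lemma line_0[simp]: "line S i j 0 = 0" by (simp add: line_def)
lemma pa_0[simp]: "pa 0 = 0" by (simp add: pa_def)
lemma pb_0[simp]: "pb i 0 = 0" by (simp add: pb_def)
lemma Qc_0[simp]: "Qc i 0 = 0" by (simp add: Qc_def)

fun sgb :: "heis \<times> cell \<Rightarrow> (heis \<times> cell) \<Rightarrow>\<^sub>0 int" where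
  "sgb ((i,j,k),E0) = pa i + pb i j + line Ec i j k"
| "sgb ((i,j,k),Ea) = Qc i j - line Eac i j k"
| "sgb ((i,j,k),Eb) = - line Ebc i j k"
| "sgb ((i,j,k),Ec) = 0"
| "sgb ((i,j,k),Eab) = line Eabc i j k"
| "sgb ((i,j,k),Eac) = 0"
| "sgb ((i,j,k),Ebc) = 0"
| "sgb ((i,j,k),Eabc) = 0"

abbreviation sg where "sg \<equiv> fe sgb"

lemma dP_pa: "dP (pa i) = el (i,0,0) E0 - el (0,0,0) E0"
  by (rule eq_by_diff[where L="\<lambda>i. dP (pa i)" and R="\<lambda>i. el (i,0,0) E0 - el (0,0,0) E0"])
     (simp_all add: pa_step frag_extend_add)

lemma dP_pb: "dP (pb i j) = el (i,j,0) E0 - el (i,0,0) E0"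
  by (rule eq_by_diff[where L="\<lambda>j. dP (pb i j)" and R="\<lambda>j. el (i,j,0) E0 - el (i,0,0) E0"])
     (simp_all add: pb_step frag_extend_add)

lemma dP_lineEc: "dP (line Ec i j k) = el (i,j,k) E0 - el (i,j,0) E0"
  by (rule eq_by_diff[where L="\<lambda>k. dP (line Ec i j k)" and R="\<lambda>k. el (i,j,k) E0 - el (i,j,0) E0"])
     (simp_all add: line_step frag_extend_add)

lemma dP_lineEbc: "dP (line Ebc i j k) = line Ec i (j+1) k - line Ec i j k - el (i,j,k) Eb + el (i,j,0) Eb"
  by (rule eq_by_diff[where L="\<lambda>k. dP (line Ebc i j k)"
        and R="\<lambda>k. line Ec i (j+1) k - line Ec i j k - el (i,j,k) Eb + el (i,j,0) Eb"])
     (simp_all add: line_step frag_extend_add algebra_simps)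

lemma line_shift: "line S i j (k + m) = line S i j m + gsum k (\<lambda>l. el (i,j,l+m) S)"
proof (rule eq_by_diff[where L="\<lambda>k. line S i j (k + m)"
        and R="\<lambda>k. line S i j m + gsum k (\<lambda>l. el (i,j,l+m) S)"])
  fix k
  have "line S i j (k + 1 + m) = line S i j (k+m) + el (i,j,k+m) S"
    using line_step[of S i j "k+m"] by (simp add: algebra_simps)
  then show "line S i j (k + 1 + m) - line S i j (k + m) =
         line S i j m + gsum (k + 1) (\<lambda>l. el (i, j, l + m) S) - (line S i j m + gsum k (\<lambda>l. el (i, j, l + m) S))"
    by (simp add: gsum_step)
qed simp

lemma dP_lineEac: "dP (line Eac i j k) = line Ec (i+1) j (k+j) - line Ec (i+1) j j - line Ec i j k
     - el (i,j,k) Ea + el (i,j,0) Ea"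
proof (rule eq_by_diff[where L="\<lambda>k. dP (line Eac i j k)"
        and R="\<lambda>k. line Ec (i+1) j (k+j) - line Ec (i+1) j j - line Ec i j k - el (i,j,k) Ea + el (i,j,0) Ea"])
  fix k
  have "line Ec (i+1) j (k+1+j) = line Ec (i+1) j (k+j) + el (i+1,j,k+j) Ec"
    using line_step[of Ec "i+1" j "k+j"] by (simp add: algebra_simps)
  note h = this
  show "dP (line Eac i j (k + 1)) - dP (line Eac i j k) =
     line Ec (i + 1) j (k + 1 + j) - line Ec (i + 1) j j - line Ec i j (k + 1) - el (i, j, k + 1) Ea + el (i, j, 0) Ea -
    (line Ec (i + 1) j (k + j) - line Ec (i + 1) j j - line Ec i j k - el (i, j, k) Ea + el (i, j, 0) Ea)"
    apply (simp only: h line_step frag_extend_add)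
    by (simp add: algebra_simps)
qed simp

lemma dP_lineEabc: "dP (line Eabc i j k) = el (i,j,k) Eab - el (i,j,0) Eab + line Eac i (j+1) k - line Eac i j k
     - line Ebc (i+1) j (k+j) + line Ebc (i+1) j j + line Ebc i j k"
proof (rule eq_by_diff[where L="\<lambda>k. dP (line Eabc i j k)"
        and R="\<lambda>k. el (i,j,k) Eab - el (i,j,0) Eab + line Eac i (j+1) k - line Eac i j k
     - line Ebc (i+1) j (k+j) + line Ebc (i+1) j j + line Ebc i j k"])
  fix k
  have "line Ebc (i+1) j (k+1+j) = line Ebc (i+1) j (k+j) + el (i+1,j,k+j) Ebc"
    using line_step[of Ebc "i+1" j "k+j"] by (simp add: algebra_simps)
  note h = this
  show "dP (line Eabc i j (k + 1)) - dP (line Eabc i j k) =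
    el (i, j, k + 1) Eab - el (i, j, 0) Eab + line Eac i (j + 1) (k + 1) - line Eac i j (k + 1) - line Ebc (i + 1) j (k + 1 + j) +
    line Ebc (i + 1) j j + line Ebc i j (k + 1) -
    (el (i, j, k) Eab - el (i, j, 0) Eab + line Eac i (j + 1) k - line Eac i j k - line Ebc (i + 1) j (k + j) +
     line Ebc (i + 1) j j + line Ebc i j k)"
    apply (simp only: h line_step frag_extend_add)
    by (simp add: algebra_simps)
qed simp

lemma dP_Qc: "dP (Qc i j) = el (i,j,0) Ea - el (i,0,0) Ea - pb (i+1) j + pb i j - line Ec (i+1) j j"
proof (rule eq_by_diff[where L="\<lambda>j. dP (Qc i j)"
        and R="\<lambda>j. el (i,j,0) Ea - el (i,0,0) Ea - pb (i+1) j + pb i j - line Ec (i+1) j j"])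
  fix j
  have "line Ec (i+1) (j+1) (j+1) = line Ec (i+1) (j+1) j + el (i+1,j+1,j) Ec"
    using line_step[of Ec "i+1" "j+1" j] by simp
  note h = this
  show "dP (Qc i (j + 1)) - dP (Qc i j) =
         el (i, j + 1, 0) Ea - el (i, 0, 0) Ea - pb (i + 1) (j + 1) + pb i (j + 1) - line Ec (i + 1) (j + 1) (j + 1) -
         (el (i, j, 0) Ea - el (i, 0, 0) Ea - pb (i + 1) j + pb i j - line Ec (i + 1) j j)"
    apply (simp only: h Qc_step pb_step frag_extend_add frag_extend_diff dP_lineEbc)
    by (simp add: algebra_simps)
qed simp

lemmas st1 = sgb.simps dPb.simps frag_extend_add frag_extend_diff frag_extend_minus frag_extend_of
  frag_extend_0 dP_pa dP_pb dP_lineEc dP_lineEbc dP_lineEac dP_lineEabc dP_Qc pa_step pb_step line_step Qc_step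

lemma sig_basis: "dP (sgb x) + sg (dPb x) = frag_of x - (if snd x = E0 then el e0 E0 else 0)"
proof -
  obtain i j k S where x: "x = ((i,j,k),S)" using prod_cases3[of "fst x"] by (metis prod.collapse)
  show ?thesis unfolding x
    by (cases S; simp only: st1; simp add: algebra_simps e0_def)
qed

definition epsP :: "((heis \<times> cell) \<Rightarrow>\<^sub>0 int) \<Rightarrow> int" where
  "epsP = lf (\<lambda>x. if snd x = E0 then 1 else 0)"

lemma sig_id: "dP (sg y) + sg (dP y) = y - frag_cmul (epsP y) (el e0 E0)"
proof -
  have "dP (sg y) + sg (dP y) = fe (\<lambda>x. dP (sgb x) + sg (dPb x)) y"
    by (simp add: fe_compose fe_add_fun)
  also have "\<dots> = fe (\<lambda>x. frag_of x - frag_cmul (if snd x = E0 then 1 else 0) (el e0 E0)) y"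
    by (rule fe_keys_cong) (simp add: sig_basis)
  also have "\<dots> = y - frag_cmul (epsP y) (el e0 E0)"
    unfolding epsP_def
    using subset_UNIV
    by (induction y rule: frag_induction)
       (auto simp: frag_extend_diff frag_cmul_diff_distrib algebra_simps)
  finally show ?thesis .
qed

lemma dPdP: "dP (dPb x) = 0"
proof -
  obtain i j k S where x: "x = ((i,j,k),S)" using prod_cases3[of "fst x"] by (metis prod.collapse)
  show ?thesis unfolding x
    by (cases S; simp only: st1; simp add: algebra_simps)
qed

lemma dPdP_gen: "dP (dP y) = 0"
  by (simp add: fe_compose dPdP fe_zero_fun)

definition actP :: "heis \<Rightarrow> ((heis \<times> cell) \<Rightarrow>\<^sub>0 int) \<Rightarrow> (heis \<times> cell) \<Rightarrow>\<^sub>0 int" where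
  "actP h = fe (\<lambda>x. el (hmul h (fst x)) (snd x))"

lemma actP_of[simp]: "actP h (el g S) = el (hmul h g) S"
  by (simp add: actP_def)
lemma actP_add[simp]: "actP h (x + y) = actP h x + actP h y"
  by (simp add: actP_def frag_extend_add)
lemma actP_diff[simp]: "actP h (x - y) = actP h x - actP h y"
  by (simp add: actP_def frag_extend_diff)
lemma actP_minus[simp]: "actP h (- x) = - actP h x"
  by (simp add: actP_def frag_extend_minus)
lemma actP_zero[simp]: "actP h 0 = 0"
  by (simp add: actP_def)
lemma actP_cmul[simp]: "actP h (frag_cmul c x) = frag_cmul c (actP h x)"
  by (simp add: actP_def frag_extend_cmul)

lemma actP_comp: "actP h (actP h' y) = actP (hmul h h') y"
  unfolding actP_def by (simp add: fe_compose hmul_assoc)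

lemma actP_e0[simp]: "actP e0 y = y"
  unfolding actP_def by (simp add: fe_id)

lemma dPb_equiv: "dPb (hmul h g, S) = actP h (dPb (g, S))"
proof -
  obtain i j k where g: "g = (i,j,k)" by (metis prod_cases3)
  obtain a b c where h: "h = (a,b,c)" by (metis prod_cases3)
  show ?thesis unfolding g h
    by (cases S; simp only: hmul_simp dPb.simps actP_add actP_diff actP_of actP_zero; simp add: algebra_simps)
qed

lemma dP_actP: "dP (actP h y) = actP h (dP y)"
  unfolding actP_def by (simp add: fe_compose dPb_equiv[unfolded actP_def])

lemma lf_gsum: "lf \<phi> (gsum k f) = gsum k (\<lambda>l. lf \<phi> (f l))"
  by (rule eq_by_diff[where L="\<lambda>k. lf \<phi> (gsum k f)" and R="\<lambda>k. gsum k (\<lambda>l. lf \<phi> (f l))"])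
     (simp_all add: gsum_step)

lemma gsum_zero[simp]: "gsum k (\<lambda>l. 0) = 0"
  by (simp add: gsum_def)

lemma epsP_sgb: "epsP (sgb x) = 0"
proof -
  obtain i j k S where x: "x = ((i,j,k),S)" using prod_cases3[of "fst x"] by (metis prod.collapse)
  show ?thesis unfolding x epsP_def
    by (cases S; simp add: pa_def pb_def line_def Qc_def lf_gsum)
qed

lemma epsP_sg: "epsP (sg y) = 0"
  unfolding epsP_def by (simp add: lf_fe epsP_sgb[unfolded epsP_def] lf_zero_fun)

lemma epsP_actP: "epsP (actP h y) = epsP y"
  unfolding epsP_def actP_def by (simp add: lf_fe)

fun cdeg :: "cell \<Rightarrow> nat" where
  "cdeg E0 = 0" | "cdeg Ea = 1" | "cdeg Eb = 1" | "cdeg Ec = 1"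
| "cdeg Eab = 2" | "cdeg Eac = 2" | "cdeg Ebc = 2" | "cdeg Eabc = 3"

lemma keys_gsum: assumes "\<And>l. Poly_Mapping.keys (f l) \<subseteq> AA" shows "Poly_Mapping.keys (gsum k f) \<subseteq> AA"
proof -
  have "Poly_Mapping.keys (sum f I) \<subseteq> AA" for I using keys_sum[of f I] assms by blast
  then show ?thesis unfolding gsum_def by (auto simp: keys_minus)
qed

lemma keys_sgb: "Poly_Mapping.keys (sgb (g,S)) \<subseteq> {x. cdeg (snd x) = Suc (cdeg S)}"
proof -
  obtain i j k where g: "g = (i,j,k)" by (metis prod_cases3)
  have ln: "Poly_Mapping.keys (line T i' j' k') \<subseteq> {x. snd x = T}" for T i' j' k'
    unfolding line_def by (rule keys_gsum) auto
  have "Poly_Mapping.keys (Qc i j) \<subseteq> {x. snd x = Eab \<or> snd x = Ebc}"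
    unfolding Qc_def
    apply (rule keys_gsum)
    using ln keys_diff by fastforce
  moreover have "Poly_Mapping.keys (pa i) \<subseteq> {x. snd x = Ea}"
    unfolding pa_def by (rule keys_gsum) auto
  moreover have "Poly_Mapping.keys (pb i j) \<subseteq> {x. snd x = Eb}"
    unfolding pb_def by (rule keys_gsum) auto
  ultimately show ?thesis unfolding g
    using ln keys_add keys_diff
    by (cases S; simp; fastforce)
qed

lemma dPb_E0[simp]: "dPb (g, E0) = 0"
  by (cases g) auto

definition dBb :: "heis list \<Rightarrow> heis list \<Rightarrow>\<^sub>0 int" where
  "dBb ys = (if length ys \<le> 1 then 0 else
     (\<Sum>i\<in>{1..length ys}. frag_cmul ((-1)^(i-1)) (frag_of (face hmul i ys))))"

abbreviation dB where "dB \<equiv> fe dBb"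

definition sBb :: "heis list \<Rightarrow> heis list \<Rightarrow>\<^sub>0 int" where
  "sBb ys = frag_of (e0 # ys)"

abbreviation sB where "sB \<equiv> fe sBb"

definition hact :: "heis \<Rightarrow> heis list \<Rightarrow> heis list" where
  "hact h ys = (case ys of [] \<Rightarrow> [] | g # xs \<Rightarrow> hmul h g # xs)"

lemma hact_simps[simp]: "hact h [] = []" "hact h (g # xs) = hmul h g # xs"
  by (simp_all add: hact_def)

definition actB :: "heis \<Rightarrow> (heis list \<Rightarrow>\<^sub>0 int) \<Rightarrow> heis list \<Rightarrow>\<^sub>0 int" where
  "actB h = fe (\<lambda>ys. frag_of (hact h ys))"

lemma actB_of[simp]: "actB h (frag_of ys) = frag_of (hact h ys)"
  by (simp add: actB_def)
lemma actB_add[simp]: "actB h (x + y) = actB h x + actB h y"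
  by (simp add: actB_def frag_extend_add)
lemma actB_diff[simp]: "actB h (x - y) = actB h x - actB h y"
  by (simp add: actB_def frag_extend_diff)
lemma actB_minus[simp]: "actB h (- x) = - actB h x"
  by (simp add: actB_def frag_extend_minus)
lemma actB_zero[simp]: "actB h 0 = 0"
  by (simp add: actB_def)
lemma actB_cmul[simp]: "actB h (frag_cmul c x) = frag_cmul c (actB h x)"
  by (simp add: actB_def frag_extend_cmul)
lemma actB_sum: "actB h (sum f I) = (\<Sum>i\<in>I. actB h (f i))"
  by (induction I rule: infinite_finite_induct) auto

lemma hact_comp: "hact h (hact h' ys) = hact (hmul h h') ys"
  by (cases ys) (simp_all add: hmul_assoc)

lemma actB_comp: "actB h (actB h' y) = actB (hmul h h') y"
  unfolding actB_def by (simp add: fe_compose hact_comp)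

definition piB :: "(heis list \<Rightarrow>\<^sub>0 int) \<Rightarrow> heis list \<Rightarrow>\<^sub>0 int" where
  "piB = fe (\<lambda>ys. frag_of (tl ys))"

lemma piB_actB: "piB (actB h y) = piB y"
proof -
  have "tl (hact h ys) = tl ys" for ys by (cases ys) auto
  then show ?thesis unfolding piB_def actB_def by (simp add: fe_compose)
qed

definition cbb :: "heis list \<Rightarrow> heis list \<Rightarrow>\<^sub>0 int" where
  "cbb xs = (if xs = [] then 0 else
     (\<Sum>i\<in>{0..length xs}. frag_cmul ((-1)^i) (frag_of (face hmul i xs))))"

abbreviation cb where "cb \<equiv> fe cbb"

lemma face_1_cons2: "face m 1 (x # y # ys) = m x y # ys"
  by (simp add: face_def)

lemma face_cons: assumes "1 \<le> i" "i \<le> length xs" "xs \<noteq> []"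
  shows "face m (Suc i) (x # xs) = x # face m i xs"
proof (cases "i = length xs")
  case True
  then show ?thesis using assms by (simp add: face_def butlast.simps split: list.splits)
next
  case False
  then have "i < length xs" using assms by simp
  then show ?thesis using assms
    by (cases i) (auto simp add: face_def nth_Cons' take_Cons' drop_Cons')
qed

lemma length_face: assumes "i \<le> length xs" "xs \<noteq> []"
  shows "length (face m i xs) = length xs - 1"
  using assms by (auto simp add: face_def min_def)

lemma sum_shift1: "(\<Sum>i\<in>{1..Suc n}. f i) = f 1 + (\<Sum>i\<in>{1..n}. (f::nat \<Rightarrow> 'a::comm_monoid_add) (Suc i))"
  by (induction n) (simp_all add: add.assoc)

lemma dBb_cons: assumes "xs \<noteq> []"
  shows "dBb (g # xs) = frag_of (hmul g (hd xs) # tl xs)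
          + (\<Sum>i\<in>{1..length xs}. frag_cmul ((-1)^i) (frag_of (g # face hmul i xs)))"
proof -
  obtain y ys where xs: "xs = y # ys" using assms by (cases xs) auto
  have "dBb (g # xs) = (\<Sum>i\<in>{1..Suc (length xs)}. frag_cmul ((-1)^(i-1)) (frag_of (face hmul i (g # xs))))"
    using assms by (simp add: dBb_def)
  also have "\<dots> = frag_of (face hmul 1 (g # xs)) +
      (\<Sum>i\<in>{1..length xs}. frag_cmul ((-1)^i) (frag_of (face hmul (Suc i) (g # xs))))"
    by (subst sum_shift1) simp
  also have "(\<Sum>i\<in>{1..length xs}. frag_cmul ((-1)^i) (frag_of (face hmul (Suc i) (g # xs))))
      = (\<Sum>i\<in>{1..length xs}. frag_cmul ((-1)^i) (frag_of (g # face hmul i xs)))"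
    by (rule sum.cong) (auto simp: face_cons assms)
  finally show ?thesis by (simp add: xs face_def del: sum.cl_ivl_Suc)
qed

lemma dBb_short: "length ys \<le> 1 \<Longrightarrow> dBb ys = 0"
  by (simp add: dBb_def)

lemma sum_shift0: "(\<Sum>i\<in>{0..n}. f i) = f 0 + (\<Sum>i\<in>{1..n}. (f::nat \<Rightarrow> 'a::comm_monoid_add) i)"
proof -
  have "{0..n} = insert 0 {1..n}" by auto
  then show ?thesis by simp
qed

lemma piB_dBb: "piB (dBb ys) = cbb (tl ys)"
proof (cases "length ys \<le> 1")
  case True
  then have "tl ys = []" by (cases ys) auto
  then show ?thesis using True by (simp add: dBb_short piB_def cbb_def)
next
  case False
  then obtain g xs where ys: "ys = g # xs" and xs: "xs \<noteq> []" by (cases ys) auto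
  have "piB (dBb ys) = frag_of (tl xs) + (\<Sum>i\<in>{1..length xs}. frag_cmul ((-1)^i) (frag_of (face hmul i xs)))"
    unfolding ys dBb_cons[OF xs] piB_def by (simp add: frag_extend_add frag_extend_sum frag_extend_cmul o_def)
  also have "\<dots> = cbb (tl ys)"
    using xs by (simp add: cbb_def ys sum_shift0 face_def)
  finally show ?thesis .
qed

lemma piB_dB: "piB (dB y) = cb (piB y)"
  unfolding piB_def by (simp add: fe_compose piB_dBb[unfolded piB_def])

lemma dBb_equiv: "dBb (hact h ys) = actB h (dBb ys)"
proof (cases "length ys \<le> 1")
  case True
  then show ?thesis by (cases ys) (auto simp: dBb_short)
next
  case False
  then obtain g xs where ys: "ys = g # xs" and xs: "xs \<noteq> []" by (cases ys) auto
  show ?thesis unfolding ys hact_simps dBb_cons[OF xs]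
    by (simp add: actB_sum hmul_assoc)
qed

lemma dB_actB: "dB (actB h y) = actB h (dB y)"
  unfolding actB_def by (simp add: fe_compose dBb_equiv[unfolded actB_def])

lemma sum_1_1: "(\<Sum>i\<in>{1..1::nat}. f i) = f 1" by simp
lemma sum_1_2: "(\<Sum>i\<in>{1..2::nat}. f i) = f 1 + f 2"
  by (simp add: numeral_2_eq_2 sum_shift1)
lemma sum_1_3: "(\<Sum>i\<in>{1..3::nat}. f i) = f 1 + f 2 + f 3"
  by (simp add: numeral_3_eq_3 sum_shift1 numeral_2_eq_2)
lemma sum_1_4: "(\<Sum>i\<in>{1..4::nat}. f i) = f 1 + f 2 + f 3 + f 4"
proof -
  have "{1..4::nat} = {1,2,3,4}" by auto
  then show ?thesis by (simp add: add.assoc)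
qed

lemma dBb2: "dBb [g,x] = frag_of [hmul g x] - frag_of [g]"
  by (simp add: dBb_cons face_def)
lemma dBb3: "dBb [g,x,y] = frag_of [hmul g x, y] - frag_of [g, hmul x y] + frag_of [g, x]"
  by (simp add: dBb_cons face_def sum_1_2)
lemma dBb4: "dBb [g,x,y,z] = frag_of [hmul g x, y, z] - frag_of [g, hmul x y, z] + frag_of [g, x, hmul y z]
     - frag_of [g, x, y]"
  by (simp add: dBb_cons face_def sum_1_3 numeral_3_eq_3)

lemma dB_dBb: "length ys \<le> 4 \<Longrightarrow> dB (dBb ys) = 0"
proof -
  assume "length ys \<le> 4"
  then consider "length ys \<le> 1" | "length ys = 2" | "length ys = 3" | "length ys = 4" by linarith
  then show ?thesis
  proof cases
    case 1 then show ?thesis by (simp add: dBb_short)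
  next
    case 2
    then obtain g x where "ys = [g,x]" by (auto simp: length_Suc_conv numeral_2_eq_2)
    then show ?thesis by (simp add: dBb2 frag_extend_diff dBb_short)
  next
    case 3
    then obtain g x y where "ys = [g,x,y]" by (auto simp: length_Suc_conv numeral_3_eq_3)
    then show ?thesis by (simp add: dBb3 dBb2 frag_extend_diff frag_extend_add hmul_assoc)
  next
    case 4
    then obtain g x y z where "ys = [g,x,y,z]"
      by (auto simp: length_Suc_conv eval_nat_numeral)
    then show ?thesis by (simp add: dBb4 dBb3 frag_extend_diff frag_extend_add hmul_assoc algebra_simps)
  qed
qed

lemma keys_dBb: "Poly_Mapping.keys (dBb ys) \<subseteq> {zs. length zs = length ys - 1}"
proof (cases "length ys \<le> 1")
  case True then show ?thesis by (simp add: dBb_short)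
next
  case False
  have "Poly_Mapping.keys (dBb ys) \<subseteq> (\<Union>i\<in>{1..length ys}. Poly_Mapping.keys (frag_cmul ((-1)^(i-1)) (frag_of (face hmul i ys))))"
    using False unfolding dBb_def by (simp add: keys_sum)
  also have "\<dots> \<subseteq> {zs. length zs = length ys - 1}"
    using False length_face[of _ ys] by (cases ys) auto
  finally show ?thesis .
qed

lemma sB_id: assumes "ys \<noteq> []"
  shows "dB (sBb ys) + sB (dBb ys) = frag_of ys - (if length ys = 1 then frag_of [e0] else 0)"
proof -
  have d: "dBb (e0 # ys) = frag_of ys + (\<Sum>i\<in>{1..length ys}. frag_cmul ((-1)^i) (frag_of (e0 # face hmul i ys)))"
    using assms by (simp add: dBb_cons)
  show ?thesis
  proof (cases "length ys = 1")
    case True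
    then obtain g where "ys = [g]" by (cases ys) auto
    then show ?thesis using d by (simp add: sBb_def dBb_short face_def)
  next
    case False
    then have "1 < length ys" using assms by (cases ys) auto
    then have "sB (dBb ys) = (\<Sum>i\<in>{1..length ys}. frag_cmul ((-1)^(i-1)) (frag_of (e0 # face hmul i ys)))"
      by (simp add: dBb_def frag_extend_sum frag_extend_cmul o_def sBb_def)
    also have "\<dots> = (\<Sum>i\<in>{1..length ys}. - frag_cmul ((-1)^i) (frag_of (e0 # face hmul i ys)))"
    proof (rule sum.cong)
      fix i assume "i \<in> {1..length ys}"
      then obtain j where "i = Suc j" by (cases i) auto
      then show "frag_cmul ((-1)^(i-1)) (frag_of (e0 # face hmul i ys)) = - frag_cmul ((-1)^i) (frag_of (e0 # face hmul i ys))"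
        by (simp del: minus_frag_cmul add: frag_cmul_minus_one[symmetric])
    qed simp
    also have "\<dots> = - (\<Sum>i\<in>{1..length ys}. frag_cmul ((-1)^i) (frag_of (e0 # face hmul i ys)))"
      by (simp del: minus_frag_cmul add: sum_negf)
    finally show ?thesis using d False by (simp add: sBb_def)
  qed
qed

definition epsB :: "(heis list \<Rightarrow>\<^sub>0 int) \<Rightarrow> int" where
  "epsB = lf (\<lambda>ys. if length ys = 1 then 1 else 0)"

lemma sB_id_gen: assumes "Poly_Mapping.keys y \<subseteq> {ys. ys \<noteq> []}"
  shows "dB (sB y) + sB (dB y) = y - frag_cmul (epsB y) (frag_of [e0])"
  using assms unfolding epsB_def
proof (induction y rule: frag_induction)
  case (one x)
  then show ?case using sB_id[of x] by (simp add: frag_cmul_distrib)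
qed (auto simp: frag_extend_diff frag_cmul_diff_distrib algebra_simps)

lemma epsB_zero: "Poly_Mapping.keys y \<subseteq> {ys. 2 \<le> length ys} \<Longrightarrow> epsB y = 0"
  unfolding epsB_def lf_sum_form by (rule sum.neutral) auto

lemma keys_fe_sub: "(\<And>k. k \<in> Poly_Mapping.keys y \<Longrightarrow> Poly_Mapping.keys (F k) \<subseteq> AA) \<Longrightarrow> Poly_Mapping.keys (fe F y) \<subseteq> AA"
  using keys_frag_extend[of F y] by blast

lemma keys_actP: "Poly_Mapping.keys (actP h z) \<subseteq> (\<lambda>x. (hmul h (fst x), snd x)) ` Poly_Mapping.keys z"
  unfolding actP_def by (rule keys_fe_sub) auto

lemma keys_actB: "Poly_Mapping.keys (actB h z) \<subseteq> hact h ` Poly_Mapping.keys z"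
  unfolding actB_def by (rule keys_fe_sub) auto

lemma length_hact[simp]: "length (hact h ys) = length ys"
  by (cases ys) auto

lemma keys_sB: "Poly_Mapping.keys (sB z) \<subseteq> (Cons e0) ` Poly_Mapping.keys z"
  by (rule keys_fe_sub) (auto simp: sBb_def)

lemma keys_diff3: "Poly_Mapping.keys a \<subseteq> AA \<Longrightarrow> Poly_Mapping.keys b \<subseteq> AA \<Longrightarrow> Poly_Mapping.keys (a - b) \<subseteq> AA"
  using keys_diff[of a b] by auto

primrec fN :: "nat \<Rightarrow> heis list \<Rightarrow> (heis \<times> cell) \<Rightarrow>\<^sub>0 int" where
  "fN 0 ys = el (hd ys) E0"
| "fN (Suc n) ys = actP (hd ys) (sg (fe (fN n) (dBb (e0 # tl ys))))"

lemma fN_equiv: "fN n (hmul h g # xs) = actP h (fN n (g # xs))"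
  by (cases n) (simp_all add: actP_comp)

lemma fe_fN_actB: "Poly_Mapping.keys y \<subseteq> {ys. ys \<noteq> []} \<Longrightarrow> fe (fN n) (actB h y) = actP h (fe (fN n) y)"
proof (induction y rule: frag_induction)
  case (one x)
  then obtain g xs where "x = g # xs" by (cases x) auto
  then show ?case by (simp add: fN_equiv)
qed (auto simp: frag_extend_diff)

lemma keys_fN: "Poly_Mapping.keys (fN n ys) \<subseteq> {x. cdeg (snd x) = n}"
proof (induction n arbitrary: ys)
  case 0 then show ?case by simp
next
  case (Suc n)
  have "Poly_Mapping.keys (fe (fN n) (dBb (e0 # tl ys))) \<subseteq> {x. cdeg (snd x) = n}"
    by (rule keys_fe_sub) (use Suc in auto)
  then have "Poly_Mapping.keys (sg (fe (fN n) (dBb (e0 # tl ys)))) \<subseteq> {x. cdeg (snd x) = Suc n}"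
    apply (intro keys_fe_sub)
    subgoal for k using keys_sgb[of "fst k" "snd k"] by auto
    done
  then show ?case using keys_actP by fastforce
qed

lemma epsP_fe: "epsP (fe F y) = lf (\<lambda>k. epsP (F k)) y"
  unfolding epsP_def by (rule lf_fe)

lemma epsP_fN_Suc: "epsP (fN (Suc n) ys) = 0"
  by (simp add: epsP_actP epsP_sg)

lemma fN_chain: "n \<le> 2 \<Longrightarrow> length ys = n + 2 \<Longrightarrow> dP (fN (Suc n) ys) = fe (fN n) (dBb ys)"
proof (induction n arbitrary: ys)
  case 0
  then obtain g x where ys: "ys = [g,x]" by (auto simp: length_Suc_conv numeral_2_eq_2)
  have Y: "fe (fN 0) (dBb (e0 # tl ys)) = el x E0 - el e0 E0"
    by (simp add: ys dBb2 frag_extend_diff)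
  have "dP (fe (fN 0) (dBb (e0 # tl ys))) = 0" unfolding Y by (simp add: frag_extend_diff)
  moreover have "epsP (fe (fN 0) (dBb (e0 # tl ys))) = 0" unfolding Y by (simp add: epsP_def)
  ultimately have sY: "dP (sg (fe (fN 0) (dBb (e0 # tl ys)))) = fe (fN 0) (dBb (e0 # tl ys))"
    using sig_id[of "fe (fN 0) (dBb (e0 # tl ys))"] by simp
  have "fN (Suc 0) ys = actP g (sg (fe (fN 0) (dBb (e0 # tl ys))))"
    by (simp only: fN.simps ys list.sel)
  then have "dP (fN (Suc 0) ys) = actP g (el x E0 - el e0 E0)"
    by (simp only: dP_actP sY) (simp only: Y)
  then show ?case by (simp add: ys dBb2 frag_extend_diff)
next
  case (Suc m)
  from Suc.prems obtain g xs where ys: "ys = g # xs" and lx: "length xs = m + 2"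
    by (cases ys) auto
  let ?x0 = "e0 # xs"
  let ?Y = "fe (fN (Suc m)) (dBb ?x0)"
  have kd: "Poly_Mapping.keys (dBb ?x0) \<subseteq> {zs. length zs = m + 2}"
    using keys_dBb[of ?x0] lx by auto
  have "dP ?Y = fe (\<lambda>k. dP (fN (Suc m) k)) (dBb ?x0)" by (simp add: fe_compose)
  also have "\<dots> = fe (\<lambda>k. fe (fN m) (dBb k)) (dBb ?x0)"
    apply (rule fe_keys_cong)
    using kd Suc.IH Suc.prems by auto
  also have "\<dots> = fe (fN m) (dB (dBb ?x0))" by (simp add: fe_compose)
  also have "\<dots> = 0" using dB_dBb[of ?x0] lx Suc.prems by simp
  finally have dY: "dP ?Y = 0" .
  have eY: "epsP ?Y = 0" by (simp add: epsP_fe epsP_fN_Suc lf_zero_fun del: fN.simps)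
  have sY: "dP (sg ?Y) = ?Y" using sig_id[of ?Y] dY eY by simp
  have ne: "Poly_Mapping.keys (dBb ?x0) \<subseteq> {ys. ys \<noteq> []}" using kd by auto
  have "fN (Suc (Suc m)) ys = actP g (sg ?Y)"
    by (simp only: fN.simps ys list.sel)
  then have "dP (fN (Suc (Suc m)) ys) = actP g ?Y"
    by (simp only: dP_actP sY)
  also have "\<dots> = fe (fN (Suc m)) (actB g (dBb ?x0))" by (simp add: fe_fN_actB[OF ne])
  also have "actB g (dBb ?x0) = dBb ys" using dBb_equiv[of g ?x0] by (simp add: ys)
  finally show ?case .
qed

primrec gN :: "nat \<Rightarrow> heis \<times> cell \<Rightarrow> heis list \<Rightarrow>\<^sub>0 int" where
  "gN 0 x = frag_of [fst x]"
| "gN (Suc n) x = actB (fst x) (sB (fe (gN n) (dPb (e0, snd x))))"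

definition gC :: "heis \<times> cell \<Rightarrow> heis list \<Rightarrow>\<^sub>0 int" where
  "gC x = gN (cdeg (snd x)) x"

lemma gN_equiv: "gN n (hmul h g, S) = actB h (gN n (g, S))"
  by (cases n) (simp_all add: actB_comp)

lemma gC_equiv: "gC (hmul h g, S) = actB h (gC (g, S))"
  by (simp add: gC_def gN_equiv)

lemma fe_gN_actP: "fe (gN n) (actP h y) = actB h (fe (gN n) y)"
  using subset_UNIV
  by (induction y rule: frag_induction) (auto simp: frag_extend_diff gN_equiv)

lemma fe_gC_actP: "fe gC (actP h y) = actB h (fe gC y)"
  using subset_UNIV
  by (induction y rule: frag_induction) (auto simp: frag_extend_diff gC_equiv)

lemma keys_gN: "Poly_Mapping.keys (gN n x) \<subseteq> {ys. length ys = Suc n}"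
proof (induction n arbitrary: x)
  case 0 then show ?case by simp
next
  case (Suc n)
  have "Poly_Mapping.keys (fe (gN n) (dPb (e0, snd x))) \<subseteq> {ys. length ys = Suc n}"
    by (rule keys_fe_sub) (use Suc in auto)
  then have "Poly_Mapping.keys (sB (fe (gN n) (dPb (e0, snd x)))) \<subseteq> {ys. length ys = Suc (Suc n)}"
    using keys_sB by fastforce
  then show ?case using keys_actB by fastforce
qed

lemma keys_dPb: "Poly_Mapping.keys (dPb (g,S)) \<subseteq> {x. cdeg (snd x) = cdeg S - 1}"
proof -
  obtain i j k where g: "g = (i,j,k)" by (metis prod_cases3)
  show ?thesis unfolding g
    by (cases S) (simp_all, (intro keys_diff3 order_trans[OF keys_add] Un_least; simp)+)
qed

lemma cdeg_le: "cdeg S \<le> 3" by (cases S) auto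

lemma gN_chain: "cdeg S = Suc n \<Longrightarrow> dB (gN (Suc n) (h,S)) = fe (gN n) (dPb (h,S))"
proof (induction n arbitrary: h S)
  case 0
  let ?W = "fe (gN 0) (dPb (e0, S))"
  have W: "?W = frag_of [(if S = Ea then (1,0,0) else if S = Eb then (0,1,0) else (0,0,1))] - frag_of [e0]"
    using 0 by (cases S) (auto simp: e0_def frag_extend_diff)
  have dW: "dB ?W = 0" unfolding W by (simp add: frag_extend_diff dBb_short)
  have eW: "epsB ?W = 0" unfolding W by (simp add: epsB_def)
  have kW: "Poly_Mapping.keys ?W \<subseteq> {ys. ys \<noteq> []}" unfolding W by (rule keys_diff3) auto
  have "dB (sB ?W) = ?W" using sB_id_gen[OF kW] dW eW by simp
  moreover have "gN 1 (h,S) = actB h (sB ?W)" by (simp only: gN.simps One_nat_def fst_conv snd_conv)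
  ultimately have "dB (gN 1 (h,S)) = actB h ?W" by (simp only: dB_actB)
  also have "\<dots> = fe (gN 0) (actP h (dPb (e0,S)))" by (simp add: fe_gN_actP)
  also have "actP h (dPb (e0,S)) = dPb (h,S)" using dPb_equiv[of h e0 S] by simp
  finally show ?case by simp
next
  case (Suc m)
  let ?W = "fe (gN (Suc m)) (dPb (e0, S))"
  have kd: "Poly_Mapping.keys (dPb (e0,S)) \<subseteq> {x. cdeg (snd x) = Suc m}"
    using keys_dPb[of e0 S] Suc.prems by auto
  have "dB ?W = fe (\<lambda>k. dB (gN (Suc m) k)) (dPb (e0,S))" by (simp add: fe_compose)
  also have "\<dots> = fe (\<lambda>k. fe (gN m) (dPb k)) (dPb (e0,S))"
    apply (rule fe_keys_cong)
    subgoal for k using kd Suc.IH[of "snd k" "fst k"] by auto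
    done
  also have "\<dots> = fe (gN m) (dP (dPb (e0,S)))" by (simp add: fe_compose)
  also have "\<dots> = 0" by (simp add: dPdP)
  finally have dW: "dB ?W = 0" .
  have kW: "Poly_Mapping.keys ?W \<subseteq> {ys. length ys = Suc (Suc m)}"
    apply (rule keys_fe_sub)
    subgoal for k using keys_gN[of "Suc m" k] by blast
    done
  then have eW: "epsB ?W = 0" by (intro epsB_zero) auto
  have kW': "Poly_Mapping.keys ?W \<subseteq> {ys. ys \<noteq> []}" using kW by auto
  have "dB (sB ?W) = ?W" using sB_id_gen[OF kW'] dW eW by simp
  moreover have "gN (Suc (Suc m)) (h,S) = actB h (sB ?W)" by (simp only: gN.simps fst_conv snd_conv)
  ultimately have "dB (gN (Suc (Suc m)) (h,S)) = actB h ?W" by (simp only: dB_actB)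
  also have "\<dots> = fe (gN (Suc m)) (actP h (dPb (e0,S)))" by (simp add: fe_gN_actP)
  also have "actP h (dPb (e0,S)) = dPb (h,S)" using dPb_equiv[of h e0 S] by simp
  finally show ?case .
qed

lemma gC_chain: "dB (gC x) = fe gC (dPb x)"
proof -
  obtain h S where x: "x = (h,S)" by (cases x)
  show ?thesis
  proof (cases "cdeg S")
    case 0
    then have "S = E0" by (cases S) auto
    then show ?thesis by (simp add: x gC_def dBb_short)
  next
    case (Suc n)
    have "dB (gC x) = fe (gN n) (dPb (h,S))" using gN_chain[OF Suc] by (simp add: x gC_def Suc)
    also have "\<dots> = fe gC (dPb (h,S))"
      apply (rule fe_keys_cong)
      using keys_dPb[of h S] Suc by (auto simp: gC_def)
    finally show ?thesis by (simp add: x)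
  qed
qed

lemma dB_fe_gC: "dB (fe gC y) = fe gC (dP y)"
  by (simp add: fe_compose gC_chain)

primrec HN :: "nat \<Rightarrow> heis list \<Rightarrow> heis list \<Rightarrow>\<^sub>0 int" where
  "HN 0 ys = 0"
| "HN (Suc n) ys = actB (hd ys) (sB (frag_of (e0 # tl ys) - fe gC (fN (Suc n) (e0 # tl ys))
                     - fe (HN n) (dBb (e0 # tl ys))))"

lemma HN_equiv: "HN n (hmul h g # xs) = actB h (HN n (g # xs))"
  by (cases n) (simp_all add: actB_comp)

lemma fe_HN_actB: "Poly_Mapping.keys y \<subseteq> {ys. ys \<noteq> []} \<Longrightarrow> fe (HN n) (actB h y) = actB h (fe (HN n) y)"
proof (induction y rule: frag_induction)
  case (one x)
  then obtain g xs where "x = g # xs" by (cases x) auto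
  then show ?case by (simp add: HN_equiv del: HN.simps)
qed (auto simp: frag_extend_diff)

lemma keys_gC_fN: "Poly_Mapping.keys (fe gC (fN n ys)) \<subseteq> {zs. length zs = Suc n}"
  apply (rule keys_fe_sub)
  subgoal for k using keys_fN[of n ys] keys_gN[of n k] by (auto simp: gC_def)
  done

lemma keys_HN: "length ys = Suc n \<Longrightarrow> Poly_Mapping.keys (HN n ys) \<subseteq> {zs. length zs = n + 2}"
proof (induction n arbitrary: ys)
  case 0 then show ?case by simp
next
  case (Suc n)
  let ?x0 = "e0 # tl ys"
  have l: "length ?x0 = Suc (Suc n)" using Suc.prems by (cases ys) auto
  have k1: "Poly_Mapping.keys (fe (HN n) (dBb ?x0)) \<subseteq> {zs. length zs = n + 2}"
    apply (rule keys_fe_sub)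
    subgoal for k using keys_dBb[of ?x0] l Suc.IH[of k] by auto
    done
  have "Poly_Mapping.keys (frag_of ?x0 - fe gC (fN (Suc n) ?x0) - fe (HN n) (dBb ?x0)) \<subseteq> {zs. length zs = n + 2}"
    apply (intro keys_diff3)
    using l keys_gC_fN[of "Suc n" ?x0] k1 by auto
  then have "Poly_Mapping.keys (sB (frag_of ?x0 - fe gC (fN (Suc n) ?x0) - fe (HN n) (dBb ?x0))) \<subseteq> {zs. length zs = Suc n + 2}"
    using keys_sB by fastforce
  then show ?case using keys_actB by (simp del: fe_compose) fastforce
qed

lemma HN_id: "n \<le> 3 \<Longrightarrow> length ys = Suc n \<Longrightarrow>
   dB (HN n ys) + fe (HN (n - 1)) (dBb ys) = frag_of ys - fe gC (fN n ys)"
proof (induction n arbitrary: ys)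
  case 0
  then obtain g where "ys = [g]" by (cases ys) auto
  then show ?case by (simp add: dBb_short gC_def)
next
  case (Suc n)
  from Suc.prems obtain g xs where ys: "ys = g # xs" and lx: "length xs = Suc n"
    by (cases ys) auto
  let ?x0 = "e0 # xs"
  let ?Y = "frag_of ?x0 - fe gC (fN (Suc n) ?x0) - fe (HN n) (dBb ?x0)"
  have kd: "Poly_Mapping.keys (dBb ?x0) \<subseteq> {zs. length zs = Suc n}"
    using keys_dBb[of ?x0] lx by auto
  have "dB (fe gC (fN (Suc n) ?x0)) = fe gC (fe (fN n) (dBb ?x0))"
    using fN_chain[of n ?x0] Suc.prems lx by (simp add: dB_fe_gC del: fN.simps)
  moreover have "dB (fe (HN n) (dBb ?x0)) = dBb ?x0 - fe gC (fe (fN n) (dBb ?x0))"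
  proof -
    have "dB (fe (HN n) (dBb ?x0)) = fe (\<lambda>k. dB (HN n k)) (dBb ?x0)" by (simp add: fe_compose)
    also have "\<dots> = fe (\<lambda>k. frag_of k - fe gC (fN n k) - fe (HN (n - 1)) (dBb k)) (dBb ?x0)"
      apply (rule fe_keys_cong)
      subgoal for k using kd Suc.IH[of k] Suc.prems by (auto simp: algebra_simps)
      done
    also have "\<dots> = dBb ?x0 - fe gC (fe (fN n) (dBb ?x0)) - fe (HN (n - 1)) (dB (dBb ?x0))"
      by (simp add: fe_diff_fun fe_id fe_compose)
    also have "dB (dBb ?x0) = 0" using dB_dBb[of ?x0] lx Suc.prems by simp
    finally show ?thesis by simp
  qed
  ultimately have dY: "dB ?Y = 0" by (simp add: frag_extend_diff)
  have kY: "Poly_Mapping.keys ?Y \<subseteq> {zs. length zs = n + 2}"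
  proof -
    have k1: "Poly_Mapping.keys (fe (HN n) (dBb ?x0)) \<subseteq> {zs. length zs = n + 2}"
      apply (rule keys_fe_sub)
      subgoal for k using kd keys_HN[of k n] by auto
      done
    show ?thesis
      apply (intro keys_diff3)
      using lx keys_gC_fN[of "Suc n" ?x0] k1 by auto
  qed
  then have eY: "epsB ?Y = 0" by (intro epsB_zero) auto
  have kY': "Poly_Mapping.keys ?Y \<subseteq> {ys. ys \<noteq> []}" using kY by auto
  have sY: "dB (sB ?Y) = ?Y" using sB_id_gen[OF kY'] dY eY by simp
  have "dB (HN (Suc n) ys) = actB g ?Y" by (simp only: ys HN.simps list.sel dB_actB sY)
  also have "\<dots> = frag_of ys - fe gC (fN (Suc n) ys) - fe (HN n) (dBb ys)"
  proof -
    have "actB g (fe gC (fN (Suc n) ?x0)) = fe gC (fN (Suc n) ys)"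
      using fN_equiv[of "Suc n" g e0 xs] by (simp add: ys fe_gC_actP[symmetric] del: fN.simps)
    moreover have "actB g (fe (HN n) (dBb ?x0)) = fe (HN n) (dBb ys)"
    proof -
      have ne: "Poly_Mapping.keys (dBb ?x0) \<subseteq> {ys. ys \<noteq> []}" using kd by auto
      show ?thesis using fe_HN_actB[OF ne, of n g] dBb_equiv[of g ?x0] by (simp add: ys)
    qed
    ultimately show ?thesis by (simp add: ys del: fN.simps HN.simps)
  qed
  finally show ?case by simp
qed

definition liftC :: "(heis list \<Rightarrow>\<^sub>0 int) \<Rightarrow> heis list \<Rightarrow>\<^sub>0 int" where
  "liftC = fe (\<lambda>xs. frag_of (e0 # xs))"

definition piP :: "((heis \<times> cell) \<Rightarrow>\<^sub>0 int) \<Rightarrow> cell \<Rightarrow>\<^sub>0 int" where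
  "piP = fe (\<lambda>x. frag_of (snd x))"

definition gbar :: "cell \<Rightarrow> heis list \<Rightarrow>\<^sub>0 int" where
  "gbar S = piB (gC (e0, S))"

definition dPbar :: "cell \<Rightarrow> cell \<Rightarrow>\<^sub>0 int" where
  "dPbar S = piP (dPb (e0, S))"

lemma piB_liftC: "piB (liftC z) = z"
  unfolding piB_def liftC_def by (simp add: fe_compose fe_id)

lemma keys_liftC: "Poly_Mapping.keys z \<subseteq> {xs. length xs = n} \<Longrightarrow> Poly_Mapping.keys (liftC z) \<subseteq> {ys. length ys = Suc n}"
  unfolding liftC_def by (rule keys_fe_sub) auto

lemma piB_fe_equiv:
  assumes M: "\<And>g xs. M (g # xs) = actB g (M (e0 # xs))"
    and k: "Poly_Mapping.keys w \<subseteq> {ys. ys \<noteq> []}"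
  shows "piB (fe M w) = fe (\<lambda>xs. piB (M (e0 # xs))) (piB w)"
  using k
proof (induction w rule: frag_induction)
  case (one x)
  then obtain g xs where "x = g # xs" by (cases x) auto
  then show ?case using M[of g xs] piB_actB[of g "M (e0 # xs)"] by (simp add: piB_def)
qed (auto simp: frag_extend_diff piB_def)

lemma piP_actP: "piP (actP h y) = piP y"
  unfolding piP_def actP_def by (simp add: fe_compose)

lemma piP_fe_equiv:
  assumes M: "\<And>g xs. M (g # xs) = actP g (M (e0 # xs))"
    and k: "Poly_Mapping.keys w \<subseteq> {ys. ys \<noteq> []}"
  shows "piP (fe M w) = fe (\<lambda>xs. piP (M (e0 # xs))) (piB w)"
  using k
proof (induction w rule: frag_induction)
  case (one x)
  then obtain g xs where "x = g # xs" by (cases x) auto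
  then show ?case using M[of g xs] by (simp add: piP_actP piB_def)
qed (auto simp: frag_extend_diff piB_def piP_def)

lemma piB_fe_gC: "piB (fe gC y) = fe gbar (piP y)"
proof -
  have "gC x = actB (fst x) (gC (e0, snd x))" for x
    using gC_equiv[of "fst x" e0 "snd x"] by simp
  then have "piB (gC x) = gbar (snd x)" for x
    by (metis gbar_def piB_actB)
  then show ?thesis unfolding piB_def piP_def
    by (simp add: fe_compose gbar_def[symmetric, unfolded piB_def])
qed

lemma piP_dP: "piP (dP y) = fe dPbar (piP y)"
proof -
  have "piP (dPb x) = dPbar (snd x)" for x
    using dPb_equiv[of "fst x" e0 "snd x"] by (simp add: dPbar_def piP_actP)
  then show ?thesis unfolding piP_def
    by (simp add: fe_compose dPbar_def[symmetric, unfolded piP_def])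
qed

lemma keys_piB: "Poly_Mapping.keys y \<subseteq> {ys. length ys = Suc n} \<Longrightarrow> Poly_Mapping.keys (piB y) \<subseteq> {xs. length xs = n}"
  unfolding piB_def by (rule keys_fe_sub) auto

lemma keys_piP: "Poly_Mapping.keys y \<subseteq> {x. cdeg (snd x) = n} \<Longrightarrow> Poly_Mapping.keys (piP y) \<subseteq> {S. cdeg S = n}"
  unfolding piP_def by (rule keys_fe_sub) auto

definition fbar :: "nat \<Rightarrow> (heis list \<Rightarrow>\<^sub>0 int) \<Rightarrow> cell \<Rightarrow>\<^sub>0 int" where
  "fbar n z = piP (fe (fN n) (liftC z))"

lemma main_hom:
  assumes n: "1 \<le> n" "n \<le> 3" and kz: "Poly_Mapping.keys z \<subseteq> {xs. length xs = n}" and cz: "cb z = 0"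
  shows "z - fe gbar (fbar n z) = cb (piB (fe (HN n) (liftC z)))"
    and "fe dPbar (fbar n z) = 0"
    and "Poly_Mapping.keys (fbar n z) \<subseteq> {S. cdeg S = n}"
    and "Poly_Mapping.keys (piB (fe (HN n) (liftC z))) \<subseteq> {xs. length xs = Suc n}"
proof -
  let ?x = "liftC z"
  have kx: "Poly_Mapping.keys ?x \<subseteq> {ys. length ys = Suc n}" using keys_liftC[OF kz] .
  have kdx: "Poly_Mapping.keys (dB ?x) \<subseteq> {ys. ys \<noteq> []}"
    apply (rule keys_fe_sub)
    subgoal for k using kx keys_dBb[of k] n by fastforce
    done
  have "dB (fe (HN n) ?x) + fe (HN (n - 1)) (dB ?x) = fe (\<lambda>k. dB (HN n k) + fe (HN (n - 1)) (dBb k)) ?x"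
    by (simp add: fe_compose fe_add_fun)
  also have "\<dots> = fe (\<lambda>k. frag_of k - fe gC (fN n k)) ?x"
    apply (rule fe_keys_cong)
    subgoal for k using kx HN_id[of n k] n by auto
    done
  also have "\<dots> = ?x - fe gC (fe (fN n) ?x)"
    by (simp add: fe_diff_fun fe_id fe_compose)
  finally have hid: "dB (fe (HN n) ?x) + fe (HN (n - 1)) (dB ?x) = ?x - fe gC (fe (fN n) ?x)" .
  have p1: "piB (dB (fe (HN n) ?x)) = cb (piB (fe (HN n) ?x))" by (rule piB_dB)
  have p2: "piB (fe (HN (n - 1)) (dB ?x)) = 0"
  proof -
    have "piB (fe (HN (n - 1)) (dB ?x)) = fe (\<lambda>xs. piB (HN (n - 1) (e0 # xs))) (piB (dB ?x))"
      by (rule piB_fe_equiv[OF _ kdx]) (metis HN_equiv hmul_e0(2))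
    also have "piB (dB ?x) = 0" by (simp add: piB_dB piB_liftC cz)
    finally show ?thesis by simp
  qed
  have p3: "piB (fe gC (fe (fN n) ?x)) = fe gbar (fbar n z)"
    by (simp add: piB_fe_gC fbar_def)
  have "piB (dB (fe (HN n) ?x) + fe (HN (n - 1)) (dB ?x)) = piB (?x - fe gC (fe (fN n) ?x))"
    using hid by simp
  then show "z - fe gbar (fbar n z) = cb (piB (fe (HN n) ?x))"
    unfolding piB_def[symmetric] using p1 p2 p3
    by (simp add: piB_def frag_extend_add frag_extend_diff piB_liftC[unfolded piB_def])
  obtain m where m: "n = Suc m" "m \<le> 2" using n by (cases n) auto
  have "dP (fe (fN n) ?x) = fe (\<lambda>k. dP (fN n k)) ?x" by (simp add: fe_compose)
  also have "\<dots> = fe (\<lambda>k. fe (fN m) (dBb k)) ?x"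
    apply (rule fe_keys_cong)
    subgoal for k using kx fN_chain[of m k] m by auto
    done
  also have "\<dots> = fe (fN m) (dB ?x)" by (simp add: fe_compose)
  finally have "fe dPbar (fbar n z) = piP (fe (fN m) (dB ?x))"
    by (simp add: fbar_def piP_dP[symmetric])
  also have "\<dots> = fe (\<lambda>xs. piP (fN m (e0 # xs))) (piB (dB ?x))"
    by (rule piP_fe_equiv[OF _ kdx]) (metis fN_equiv hmul_e0(2))
  also have "piB (dB ?x) = 0" by (simp add: piB_dB piB_liftC cz)
  finally show "fe dPbar (fbar n z) = 0" by simp
  show "Poly_Mapping.keys (fbar n z) \<subseteq> {S. cdeg S = n}"
    unfolding fbar_def
    apply (rule keys_piP)
    apply (rule keys_fe_sub)
    using keys_fN by blast
  show "Poly_Mapping.keys (piB (fe (HN n) ?x)) \<subseteq> {xs. length xs = Suc n}"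
    apply (rule keys_piB)
    apply (rule keys_fe_sub)
    subgoal for k using kx keys_HN[of k n] by auto
    done
qed

definition hom :: "nat \<Rightarrow> (heis list \<Rightarrow>\<^sub>0 int) \<Rightarrow> (heis list \<Rightarrow>\<^sub>0 int) \<Rightarrow> bool" where
  "hom n x y \<longleftrightarrow> (\<exists>u. Poly_Mapping.keys u \<subseteq> {xs. length xs = Suc n} \<and> x - y = cb u)"

lemma hom_refl: "hom n x x"
  unfolding hom_def by (rule exI[of _ 0]) simp

lemma hom_sym: "hom n x y \<Longrightarrow> hom n y x"
  unfolding hom_def
  apply (elim exE conjE)
  subgoal for u by (rule exI[of _ "- u"]) (simp add: frag_extend_minus; metis minus_diff_eq)
  done

lemma keys_add_sub: "Poly_Mapping.keys u \<subseteq> AA \<Longrightarrow> Poly_Mapping.keys v \<subseteq> AA \<Longrightarrow> Poly_Mapping.keys (u + v) \<subseteq> AA"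
  using keys_add[of u v] by blast

lemma frag_cmul_diff2: "frag_cmul c (x - y) = frag_cmul c x - frag_cmul c y"
  by (rule poly_mapping_eqI) (simp add: lookup_minus algebra_simps)

lemma hom_trans: "hom n x y \<Longrightarrow> hom n y z \<Longrightarrow> hom n x z"
  unfolding hom_def
proof (elim exE conjE)
  fix u v assume "Poly_Mapping.keys u \<subseteq> {xs. length xs = Suc n}" "x - y = cb u"
    "Poly_Mapping.keys v \<subseteq> {xs. length xs = Suc n}" "y - z = cb v"
  then show "\<exists>u. Poly_Mapping.keys u \<subseteq> {xs. length xs = Suc n} \<and> x - z = cb u"
    by (intro exI[of _ "u + v"] conjI keys_add_sub) (simp_all add: frag_extend_add algebra_simps)
qed

lemma hom_add: "hom n x y \<Longrightarrow> hom n x' y' \<Longrightarrow> hom n (x + x') (y + y')"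
  unfolding hom_def
proof (elim exE conjE)
  fix u v assume "Poly_Mapping.keys u \<subseteq> {xs. length xs = Suc n}" "x - y = cb u"
    "Poly_Mapping.keys v \<subseteq> {xs. length xs = Suc n}" "x' - y' = cb v"
  then show "\<exists>u. Poly_Mapping.keys u \<subseteq> {xs. length xs = Suc n} \<and> x + x' - (y + y') = cb u"
    by (intro exI[of _ "u + v"] conjI keys_add_sub) (simp_all add: frag_extend_add algebra_simps)
qed

lemma hom_cmul: "hom n x y \<Longrightarrow> hom n (frag_cmul c x) (frag_cmul c y)"
  unfolding hom_def
proof (elim exE conjE)
  fix u assume "Poly_Mapping.keys u \<subseteq> {xs. length xs = Suc n}" "x - y = cb u"
  then show "\<exists>u. Poly_Mapping.keys u \<subseteq> {xs. length xs = Suc n} \<and> frag_cmul c x - frag_cmul c y = cb u"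
    using keys_cmul[of c u]
    by (intro exI[of _ "frag_cmul c u"] conjI) (auto simp: frag_extend_cmul frag_cmul_diff2[symmetric])
qed

lemma hom_bd: "Poly_Mapping.keys u \<subseteq> {xs. length xs = Suc n} \<Longrightarrow> x - y = cb u \<Longrightarrow> hom n x y"
  unfolding hom_def by blast

lemma lf_sum: "lf \<phi> (sum f I) = (\<Sum>i\<in>I. lf \<phi> (f i))"
  by (induction I rule: infinite_finite_induct) auto

lemma lf_cbb: "xs \<noteq> [] \<Longrightarrow> lf \<phi> (cbb xs) = cobd hmul \<phi> xs"
  by (simp add: cbb_def cobd_def lf_sum atMost_atLeast0)

lemma lf_cb_cocycle:
  assumes "cocycle n \<phi>" "Poly_Mapping.keys u \<subseteq> {xs. length xs = Suc n}"
  shows "lf \<phi> (cb u) = 0"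
proof -
  have "lf \<phi> (cb u) = lf (\<lambda>k. lf \<phi> (cbb k)) u" by (rule lf_fe)
  also have "\<dots> = lf (\<lambda>k. 0) u"
    apply (rule lf_cong)
    subgoal for k using assms by (cases k) (auto simp: lf_cbb cocycle_def)
    done
  finally show ?thesis by (simp add: lf_zero_fun)
qed

lemma hom_lf: "cocycle n \<phi> \<Longrightarrow> hom n x y \<Longrightarrow> lf \<phi> x = lf \<phi> y"
  unfolding hom_def using lf_cb_cocycle by (metis eq_iff_diff_eq_0 lf_diff)

section \<open>cocycles\<close>

definition Tri :: "int \<Rightarrow> int" where "Tri m = (m * (m - 1)) div 2"

lemma Tri_two: "2 * Tri m = m * (m - 1)"
proof -
  have "even (m * (m - 1))" by auto
  then show ?thesis unfolding Tri_def by simp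
qed

lemma Tri_add: "Tri (m + n) = Tri m + Tri n + m * n"
proof -
  have "2 * Tri (m + n) = 2 * (Tri m + Tri n + m * n)"
    unfolding distrib_left Tri_two by (simp add: algebra_simps)
  then show ?thesis by simp
qed

lemma h_hmul[simp]: "h1 (hmul x y) = h1 x + h1 y" "h2 (hmul x y) = h2 x + h2 y"
   "h3 (hmul x y) = h3 x + h3 y + h2 x * h1 y"
  by (simp_all add: hmul_def h1_def h2_def h3_def)

lemma beta1_eq: "beta 1 (x # y # r) = h3 x * h1 y + h2 x * Tri (h1 y)"
  by (simp add: beta_def Tri_def)
lemma beta2_eq: "beta 2 (x # y # r) = (h1 x * h2 x - h3 x) * h2 y + h1 x * Tri (h2 y)"
  by (simp add: beta_def Tri_def)
lemma gamma_eq: "gamma (x # y # z # r) = (h3 x * h1 y + h2 x * Tri (h1 y)) * h2 z"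
  by (simp add: gamma_def Tri_def)

lemma atMost_2: "(\<Sum>i\<le>2::nat. f i) = f 0 + f 1 + (f 2 :: int)"
  by (simp add: numeral_2_eq_2)
lemma atMost_3: "(\<Sum>i\<le>3::nat. f i) = f 0 + f 1 + f 2 + (f 3 :: int)"
  by (simp add: numeral_3_eq_3 numeral_2_eq_2)
lemma atMost_4: "(\<Sum>i\<le>4::nat. f i) = f 0 + f 1 + f 2 + f 3 + (f 4 :: int)"
proof -
  have "(4::nat) = Suc 3" by simp
  then show ?thesis by (simp only: sum.atMost_Suc atMost_3)
qed

lemma cobd2: "cobd hmul \<phi> [x,y] = \<phi> [y] - \<phi> [hmul x y] + \<phi> [x]"
  by (simp add: cobd_def atMost_2 face_def)
lemma cobd3: "cobd hmul \<phi> [x,y,z] = \<phi> [y,z] - \<phi> [hmul x y, z] + \<phi> [x, hmul y z] - \<phi> [x,y]"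
  by (simp add: cobd_def atMost_3 face_def numeral_2_eq_2)
lemma cobd4: "cobd hmul \<phi> [w,x,y,z] = \<phi> [x,y,z] - \<phi> [hmul w x, y, z] + \<phi> [w, hmul x y, z]
     - \<phi> [w, x, hmul y z] + \<phi> [w,x,y]"
  by (simp add: cobd_def atMost_4 face_def numeral_2_eq_2 numeral_3_eq_3)

lemma len2: "length xs = 2 \<Longrightarrow> \<exists>x y. xs = [x,y]"
  by (auto simp: length_Suc_conv numeral_2_eq_2)
lemma len3: "length xs = 3 \<Longrightarrow> \<exists>x y z. xs = [x,y,z]"
  by (auto simp: length_Suc_conv numeral_3_eq_3)
lemma len4: "length xs = 4 \<Longrightarrow> \<exists>w x y z. xs = [w,x,y,z]"
  by (auto simp: length_Suc_conv eval_nat_numeral)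

lemma alpha_cocycle: "cocycle 1 (alpha i)"
  unfolding cocycle_def
proof (intro allI impI)
  fix xs :: "heis list" assume "length xs = 1 + 1"
  then have "length xs = 2" by simp
  from len2[OF this] obtain x y where xs: "xs = [x,y]" by blast
  show "cobd hmul (alpha i) xs = 0" by (simp add: xs cobd2 alpha_def)
qed

lemma beta_cocycle: assumes "i \<in> {1,2}" shows "cocycle 2 (beta i)"
  unfolding cocycle_def
proof (intro allI impI)
  fix xs :: "heis list" assume "length xs = 2 + 1"
  then have "length xs = 3" by simp
  from len3[OF this] obtain x y z where xs: "xs = [x,y,z]" by blast
  show "cobd hmul (beta i) xs = 0"
  proof (cases "i = 1")
    case True
    show ?thesis unfolding xs True cobd3 beta1_eq h_hmul Tri_add by algebra
  next
    case False
    then have "i = 2" using assms by auto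
    show ?thesis unfolding xs \<open>i = 2\<close> cobd3 beta2_eq h_hmul Tri_add by algebra
  qed
qed

lemma gamma_cocycle: "cocycle 3 gamma"
  unfolding cocycle_def
proof (intro allI impI)
  fix xs :: "heis list" assume "length xs = 3 + 1"
  then have "length xs = 4" by simp
  from len4[OF this] obtain w x y z where xs: "xs = [w,x,y,z]" by blast
  show "cobd hmul gamma xs = 0"
    unfolding xs cobd4 gamma_eq h_hmul Tri_add by algebra
qed

lemma cup_cocycle: assumes "i \<in> {1,2}" shows "cocycle 3 (cup 2 (beta i) (alpha j))"
  unfolding cocycle_def
proof (intro allI impI)
  fix xs :: "heis list" assume "length xs = 3 + 1"
  then have "length xs = 4" by simp
  from len4[OF this] obtain w x y z where xs: "xs = [w,x,y,z]" by blast
  have i: "i = 1 \<or> i = 2" using assms by auto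
  have t: "take 2 [a,b,c,d] = [a,b]" "drop 2 [a,b,c,d] = [c,d]" for a b c d :: heis
    by (simp_all add: numeral_2_eq_2)
  have t2: "take 2 [a,b,c] = [a,b]" "drop 2 [a,b,c] = [c]" for a b c :: heis
    by (simp_all add: numeral_2_eq_2)
  have al: "alpha j [v] = (if j = 1 then h1 v else h2 v)" "alpha j [v, v'] = (if j = 1 then h1 v else h2 v)" for v v'
    by (simp_all add: alpha_def)
  show "cobd hmul (cup 2 (beta i) (alpha j)) xs = 0"
  proof (cases "j = 1")
    case True
    show ?thesis using i
    proof
      assume ii: "i = 1" show ?thesis unfolding ii True xs cobd4 cup_def t t2 alpha_def by (simp only: simp_thms if_True nth_Cons_0 beta1_eq h_hmul Tri_add) algebra
    next
      assume ii: "i = 2" show ?thesis unfolding ii True xs cobd4 cup_def t t2 alpha_def by (simp only: simp_thms if_True nth_Cons_0 beta2_eq h_hmul Tri_add) algebra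
    qed
  next
    case False
    then have F: "(j = 1) = False" by simp
    show ?thesis using i
    proof
      assume ii: "i = 1" show ?thesis unfolding ii xs cobd4 cup_def t t2 alpha_def F by (simp only: if_False nth_Cons_0 beta1_eq h_hmul Tri_add) algebra
    next
      assume ii: "i = 2" show ?thesis unfolding ii xs cobd4 cup_def t t2 alpha_def F by (simp only: if_False nth_Cons_0 beta2_eq h_hmul Tri_add) algebra
    qed
  qed
qed

lemma cbb1: "cbb [x] = 0"
  by (simp add: cbb_def face_def)
lemma cbb2: "cbb [x,y] = frag_of [y] - frag_of [hmul x y] + frag_of [x]"
proof -
  have "{0..2::nat} = {0,1,2}" by auto
  then show ?thesis by (simp add: cbb_def face_def)
qed
lemma cbb3: "cbb [x,y,z] = frag_of [y,z] - frag_of [hmul x y, z] + frag_of [x, hmul y z] - frag_of [x,y]"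
proof -
  have "{0..3::nat} = {0,1,2,3}" by auto
  then show ?thesis by (simp add: cbb_def face_def numeral_2_eq_2)
qed

lemma gbar_chain: "cb (gbar S) = fe gbar (dPbar S)"
proof -
  have "cb (gbar S) = piB (dB (gC (e0,S)))" by (simp add: gbar_def piB_dB)
  also have "\<dots> = piB (fe gC (dPb (e0,S)))" by (simp add: gC_chain)
  also have "\<dots> = fe gbar (dPbar S)" by (simp add: piB_fe_gC dPbar_def)
  finally show ?thesis .
qed

lemma keys_gbar: "Poly_Mapping.keys (gbar S) \<subseteq> {xs. length xs = cdeg S}"
  unfolding gbar_def gC_def by (rule keys_piB) (use keys_gN in auto)

lemma dPbar_vals: "dPbar Eab = - frag_of Ec" "dPbar Eac = 0" "dPbar Ebc = 0"
  by (simp_all add: dPbar_def piP_def e0_def frag_extend_add frag_extend_diff)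

lemma gbar_Ea: "gbar Ea = frag_of [ga] - frag_of [e0]"
  by (simp add: gbar_def gC_def e0_def piB_def sBb_def frag_extend_add frag_extend_diff ga_def)
lemma gbar_Eb: "gbar Eb = frag_of [gb] - frag_of [e0]"
  by (simp add: gbar_def gC_def e0_def piB_def sBb_def frag_extend_add frag_extend_diff gb_def)

definition B1f :: "heis list \<Rightarrow>\<^sub>0 int" where "B1f = frag_of [gc, ga] - frag_of [ga, gc]"
definition B2f :: "heis list \<Rightarrow>\<^sub>0 int" where "B2f = frag_of [gb, gc] - frag_of [gc, gb]"
definition Cf :: "heis list \<Rightarrow>\<^sub>0 int" where
  "Cf = frag_of [(0,0,-1), (0,1,1), (1,-1,-1)]
        + frag_of [(0,1,1), (1,-1,-1), (-1,1,-1)]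
        + frag_of [(1,-1,-1), (-1,1,-1), (1,0,1)]
        + frag_of [(-1,1,-1), (1,0,1), (0,0,-1)]
        - frag_of [(1,0,1), (-1,1,-1), (1,-1,-1)]
        - frag_of [(-1,1,-1), (1,-1,-1), (0,1,1)]"

lemma gbar_Eac: "gbar Eac - (- B1f) = cb (frag_of [ga,e0,e0] + frag_of [e0,e0,ga] - frag_of [gc,e0,e0] - frag_of [e0,e0,gc])"
  by (simp add: gbar_def gC_def e0_def piB_def sBb_def frag_extend_add frag_extend_diff ga_def gc_def B1f_def
      cbb3 numeral_2_eq_2 algebra_simps)

lemma gbar_Ebc: "gbar Ebc - B2f = cb (frag_of [gb,e0,e0] + frag_of [e0,e0,gb] - frag_of [gc,e0,e0] - frag_of [e0,e0,gc])"
  by (simp add: gbar_def gC_def e0_def piB_def sBb_def frag_extend_add frag_extend_diff gb_def gc_def B2f_def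
      cbb3 numeral_2_eq_2 algebra_simps)

lemma cb_Cf: "cb Cf = 0"
  by (simp add: Cf_def cbb3 frag_extend_add frag_extend_diff algebra_simps)

lemma gamma_Cf: "lf gamma Cf = 1"
  by (simp add: Cf_def gamma_def h1_def h2_def h3_def)

lemma lookup_zero_notkey: "S \<notin> Poly_Mapping.keys y \<Longrightarrow> Poly_Mapping.lookup y S = 0"
  by (simp add: in_keys_iff)

lemma decomp1: assumes "Poly_Mapping.keys y \<subseteq> {S. cdeg S = 1}"
  shows "y = frag_cmul (Poly_Mapping.lookup y Ea) (frag_of Ea) + frag_cmul (Poly_Mapping.lookup y Eb) (frag_of Eb)
           + frag_cmul (Poly_Mapping.lookup y Ec) (frag_of Ec)"
proof (rule poly_mapping_eqI)
  fix S
  have nk: "cdeg S \<noteq> 1 \<Longrightarrow> Poly_Mapping.lookup y S = 0"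
    using assms by (metis (mono_tags) in_keys_iff mem_Collect_eq subsetD)
  show "Poly_Mapping.lookup y S = Poly_Mapping.lookup (frag_cmul (Poly_Mapping.lookup y Ea) (frag_of Ea) + frag_cmul (Poly_Mapping.lookup y Eb) (frag_of Eb)
           + frag_cmul (Poly_Mapping.lookup y Ec) (frag_of Ec)) S"
    using nk by (cases S) (simp_all add: lookup_add)
qed

lemma decomp2: assumes "Poly_Mapping.keys y \<subseteq> {S. cdeg S = 2}"
  shows "y = frag_cmul (Poly_Mapping.lookup y Eab) (frag_of Eab) + frag_cmul (Poly_Mapping.lookup y Eac) (frag_of Eac)
           + frag_cmul (Poly_Mapping.lookup y Ebc) (frag_of Ebc)"
proof (rule poly_mapping_eqI)
  fix S
  have nk: "cdeg S \<noteq> 2 \<Longrightarrow> Poly_Mapping.lookup y S = 0"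
    using assms by (metis (mono_tags) in_keys_iff mem_Collect_eq subsetD)
  show "Poly_Mapping.lookup y S = Poly_Mapping.lookup (frag_cmul (Poly_Mapping.lookup y Eab) (frag_of Eab) + frag_cmul (Poly_Mapping.lookup y Eac) (frag_of Eac)
           + frag_cmul (Poly_Mapping.lookup y Ebc) (frag_of Ebc)) S"
    using nk by (cases S) (simp_all add: lookup_add)
qed

lemma decomp3: assumes "Poly_Mapping.keys y \<subseteq> {S. cdeg S = 3}"
  shows "y = frag_cmul (Poly_Mapping.lookup y Eabc) (frag_of Eabc)"
proof (rule poly_mapping_eqI)
  fix S
  have nk: "cdeg S \<noteq> 3 \<Longrightarrow> Poly_Mapping.lookup y S = 0"
    using assms by (metis (mono_tags) in_keys_iff mem_Collect_eq subsetD)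
  show "Poly_Mapping.lookup y S = Poly_Mapping.lookup (frag_cmul (Poly_Mapping.lookup y Eabc) (frag_of Eabc)) S"
    using nk by (cases S) simp_all
qed

lemma frag_cmul_neg2: "frag_cmul c (- x) = frag_cmul (- c) x"
  by (rule poly_mapping_eqI) simp

lemma hom_from_main:
  assumes "1 \<le> n" "n \<le> 3" "Poly_Mapping.keys z \<subseteq> {xs. length xs = n}" "cb z = 0"
  shows "hom n z (fe gbar (fbar n z))"
  using main_hom[OF assms] by (intro hom_bd) auto

lemma e0_bd: "hom 1 (frag_of [e0]) 0"
  by (rule hom_bd[of "frag_of [e0,e0]"]) (auto simp: cbb2)

lemma H1:
  assumes kz: "Poly_Mapping.keys z \<subseteq> {xs. length xs = 1}"
  shows "hom 1 z (frag_cmul (lf (alpha 1) z) (frag_of [ga]) + frag_cmul (lf (alpha 2) z) (frag_of [gb]))"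
proof -
  have cz: "cb z = 0"
  proof -
    have "cb z = fe (\<lambda>k. 0) z"
      apply (rule fe_keys_cong)
      subgoal for k using kz by (cases k) (auto simp: cbb1)
      done
    then show ?thesis by (simp add: fe_zero_fun)
  qed
  let ?y = "fbar 1 z"
  have ky: "Poly_Mapping.keys ?y \<subseteq> {S. cdeg S = 1}" using main_hom(3)[of 1 z] kz cz by auto
  define ca where "ca = Poly_Mapping.lookup ?y Ea"
  define cb' where "cb' = Poly_Mapping.lookup ?y Eb"
  define cc where "cc = Poly_Mapping.lookup ?y Ec"
  have h0: "hom 1 z (fe gbar ?y)" using hom_from_main[of 1 z] kz cz by simp
  have "fe gbar ?y = frag_cmul ca (gbar Ea) + frag_cmul cb' (gbar Eb) + frag_cmul cc (gbar Ec)"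
    by (subst decomp1[OF ky]) (simp add: frag_extend_add frag_extend_cmul ca_def cb'_def cc_def)
  moreover have "hom 1 (gbar Ec) 0"
  proof (rule hom_bd[of "- gbar Eab"])
    show "Poly_Mapping.keys (- gbar Eab) \<subseteq> {xs. length xs = Suc 1}" using keys_gbar[of Eab] by (simp add: numeral_2_eq_2)
    show "gbar Ec - 0 = cb (- gbar Eab)"
      using gbar_chain[of Eab] by (simp add: dPbar_vals frag_extend_minus)
  qed
  moreover have "hom 1 (gbar Ea) (frag_of [ga])"
    unfolding gbar_Ea using hom_add[OF hom_refl e0_bd[THEN hom_cmul[of _ _ _ "-1"]], of "frag_of [ga]"]
    by simp
  moreover have "hom 1 (gbar Eb) (frag_of [gb])"
    unfolding gbar_Eb using hom_add[OF hom_refl e0_bd[THEN hom_cmul[of _ _ _ "-1"]], of "frag_of [gb]"]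
    by simp
  ultimately have h1: "hom 1 z (frag_cmul ca (frag_of [ga]) + frag_cmul cb' (frag_of [gb]))"
  proof -
    assume e: "fe gbar ?y = frag_cmul ca (gbar Ea) + frag_cmul cb' (gbar Eb) + frag_cmul cc (gbar Ec)"
      and hc: "hom 1 (gbar Ec) 0" and ha: "hom 1 (gbar Ea) (frag_of [ga])" and hb: "hom 1 (gbar Eb) (frag_of [gb])"
    have "hom 1 (frag_cmul ca (gbar Ea) + frag_cmul cb' (gbar Eb) + frag_cmul cc (gbar Ec))
               (frag_cmul ca (frag_of [ga]) + frag_cmul cb' (frag_of [gb]) + frag_cmul cc 0)"
      by (intro hom_add hom_cmul ha hb hc)
    then show ?thesis using h0 e hom_trans by fastforce
  qed
  have "lf (alpha 1) z = ca" "lf (alpha 2) z = cb'"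
    using hom_lf[OF alpha_cocycle h1] by (simp_all add: alpha_def ga_def gb_def h1_def h2_def)
  then show ?thesis using h1 by simp
qed

lemma keys_B: "Poly_Mapping.keys B1f \<subseteq> {xs. length xs = 2}" "Poly_Mapping.keys B2f \<subseteq> {xs. length xs = 2}"
  unfolding B1f_def B2f_def by (intro keys_diff3; simp)+

lemma H2:
  assumes kz: "Poly_Mapping.keys z \<subseteq> {xs. length xs = 2}" and cz: "cb z = 0"
  shows "hom 2 z (frag_cmul (lf (beta 1) z) B1f + frag_cmul (lf (beta 2) z) B2f)"
proof -
  let ?y = "fbar 2 z"
  have ky: "Poly_Mapping.keys ?y \<subseteq> {S. cdeg S = 2}" using main_hom(3)[of 2 z] kz cz by auto
  have dy: "fe dPbar ?y = 0" using main_hom(2)[of 2 z] kz cz by auto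
  define c1 where "c1 = Poly_Mapping.lookup ?y Eab"
  define c2 where "c2 = Poly_Mapping.lookup ?y Eac"
  define c3 where "c3 = Poly_Mapping.lookup ?y Ebc"
  have y: "?y = frag_cmul c1 (frag_of Eab) + frag_cmul c2 (frag_of Eac) + frag_cmul c3 (frag_of Ebc)"
    using decomp2[OF ky] by (simp add: c1_def c2_def c3_def)
  have "fe dPbar ?y = frag_cmul (- c1) (frag_of Ec)"
    by (subst y) (simp add: frag_extend_add frag_extend_cmul dPbar_vals frag_cmul_neg2)
  then have "c1 = 0" using dy by simp
  have h0: "hom 2 z (fe gbar ?y)" using hom_from_main[of 2 z] kz cz by simp
  have "fe gbar ?y = frag_cmul c2 (gbar Eac) + frag_cmul c3 (gbar Ebc)"
    by (subst y) (simp add: frag_extend_add frag_extend_cmul \<open>c1 = 0\<close>)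
  moreover have "hom 2 (gbar Eac) (- B1f)"
    by (rule hom_bd[OF _ gbar_Eac]) (intro keys_diff3 keys_add_sub; simp)
  moreover have "hom 2 (gbar Ebc) B2f"
    by (rule hom_bd[OF _ gbar_Ebc]) (intro keys_diff3 keys_add_sub; simp)
  ultimately have h1: "hom 2 z (frag_cmul c2 (- B1f) + frag_cmul c3 B2f)"
  proof -
    assume e: "fe gbar ?y = frag_cmul c2 (gbar Eac) + frag_cmul c3 (gbar Ebc)"
      and ha: "hom 2 (gbar Eac) (- B1f)" and hb: "hom 2 (gbar Ebc) B2f"
    have "hom 2 (frag_cmul c2 (gbar Eac) + frag_cmul c3 (gbar Ebc)) (frag_cmul c2 (- B1f) + frag_cmul c3 B2f)"
      by (intro hom_add hom_cmul ha hb)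
    then show ?thesis using h0 e hom_trans by fastforce
  qed
  have b: "lf (beta 1) B1f = 1" "lf (beta 2) B1f = 0" "lf (beta 1) B2f = 0" "lf (beta 2) B2f = 1"
    by (simp_all add: B1f_def B2f_def beta_def ga_def gb_def gc_def h1_def h2_def h3_def)
  have "lf (beta 1) z = - c2" "lf (beta 2) z = c3"
    using hom_lf[OF beta_cocycle h1] b by (simp_all add: frag_cmul_minus_one[symmetric] del: frag_cmul_minus_one)
  moreover have "frag_cmul c2 (- B1f) = frag_cmul (- c2) B1f"
    by (rule frag_cmul_neg2)
  ultimately show ?thesis using h1 by simp
qed

lemma keys_Cf: "Poly_Mapping.keys Cf \<subseteq> {xs. length xs = 3}"
  unfolding Cf_def by (intro keys_diff3 keys_add_sub; simp)

lemma H3: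
  assumes kz: "Poly_Mapping.keys z \<subseteq> {xs. length xs = 3}" and cz: "cb z = 0"
  shows "hom 3 z (frag_cmul (lf gamma z) Cf)"
proof -
  have gen: "hom 3 x (frag_cmul (Poly_Mapping.lookup (fbar 3 x) Eabc) (gbar Eabc))"
    if "Poly_Mapping.keys x \<subseteq> {xs. length xs = 3}" "cb x = 0" for x
  proof -
    have ky: "Poly_Mapping.keys (fbar 3 x) \<subseteq> {S. cdeg S = 3}" using main_hom(3)[of 3 x] that by auto
    have "fe gbar (fbar 3 x) = frag_cmul (Poly_Mapping.lookup (fbar 3 x) Eabc) (gbar Eabc)"
      by (subst decomp3[OF ky]) (simp add: frag_extend_cmul)
    then show ?thesis using hom_from_main[of 3 x] that by simp
  qed
  define w where "w = gbar Eabc"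
  define c where "c = Poly_Mapping.lookup (fbar 3 z) Eabc"
  define cC where "cC = Poly_Mapping.lookup (fbar 3 Cf) Eabc"
  have hz: "hom 3 z (frag_cmul c w)" using gen[OF kz cz] by (simp add: c_def w_def)
  have hC: "hom 3 Cf (frag_cmul cC w)" using gen[OF keys_Cf cb_Cf] by (simp add: cC_def w_def)
  have "1 = cC * lf gamma w" using hom_lf[OF gamma_cocycle hC] gamma_Cf by simp
  then have cc: "cC * cC = 1" "lf gamma w = cC" by (auto simp: zmult_eq_1_iff[of cC] eq_commute[of 1])
  have gz: "lf gamma z = c * cC" using hom_lf[OF gamma_cocycle hz] cc by simp
  have "hom 3 (frag_cmul cC Cf) w" using hom_cmul[OF hC, of cC] cc by simp
  then have "hom 3 w (frag_cmul cC Cf)" by (rule hom_sym)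
  then have "hom 3 (frag_cmul c w) (frag_cmul c (frag_cmul cC Cf))" by (rule hom_cmul)
  then have "hom 3 (frag_cmul c w) (frag_cmul (lf gamma z) Cf)" by (simp add: gz)
  then show ?thesis using hz by (rule hom_trans[rotated])
qed

lemma bnd_eq:
  assumes "\<And>xs. xs \<in> Poly_Mapping.keys x \<Longrightarrow> xs \<noteq> []"
  shows "bnd hmul (Poly_Mapping.lookup x) ys = Poly_Mapping.lookup (cb x) ys"
proof -
  have kx: "{xs. Poly_Mapping.lookup x xs \<noteq> 0} = Poly_Mapping.keys x" by (auto simp: in_keys_iff)
  have "Poly_Mapping.lookup (cb x) ys = (\<Sum>k\<in>Poly_Mapping.keys x. Poly_Mapping.lookup x k * Poly_Mapping.lookup (cbb k) ys)"
    by (simp add: frag_extend_def lookup_sum)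
  also have "\<dots> = (\<Sum>k\<in>Poly_Mapping.keys x. \<Sum>i\<le>length k. if face hmul i k = ys then (-1)^i * Poly_Mapping.lookup x k else 0)"
  proof (rule sum.cong)
    fix k assume k: "k \<in> Poly_Mapping.keys x"
    then have "k \<noteq> []" using assms by auto
    then show "Poly_Mapping.lookup x k * Poly_Mapping.lookup (cbb k) ys =
        (\<Sum>i\<le>length k. if face hmul i k = ys then (-1)^i * Poly_Mapping.lookup x k else 0)"
      apply (simp add: cbb_def lookup_sum sum_distrib_left atMost_atLeast0 if_distrib mult.commute cong: if_cong)
      apply (rule sum.cong)
       apply auto
      done
  qed simp
  finally show ?thesis unfolding bnd_def kx by simp
qed

definition fr :: "(heis list \<Rightarrow> int) \<Rightarrow> heis list \<Rightarrow>\<^sub>0 int" where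
  "fr c = Abs_poly_mapping c"

lemma lookup_fr: "finite {xs. c xs \<noteq> 0} \<Longrightarrow> Poly_Mapping.lookup (fr c) = c"
  unfolding fr_def by (simp add: Abs_poly_mapping_inverse)

lemma keys_fr: "finite {xs. c xs \<noteq> 0} \<Longrightarrow> Poly_Mapping.keys (fr c) = {xs. c xs \<noteq> 0}"
  by (auto simp: in_keys_iff lookup_fr)

lemma is_chain_fr: "is_chain n c \<Longrightarrow> Poly_Mapping.keys (fr c) \<subseteq> {xs. length xs = n}"
  unfolding is_chain_def by (auto simp: keys_fr)

lemma is_chain_lookup: "Poly_Mapping.keys u \<subseteq> {xs. length xs = n} \<Longrightarrow> is_chain n (Poly_Mapping.lookup u)"
  unfolding is_chain_def by (auto simp: in_keys_iff[symmetric] subset_iff)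

lemma cycle_cb: "cycle n z \<Longrightarrow> 1 \<le> n \<Longrightarrow> cb (fr z) = 0"
  unfolding cycle_def
proof (elim conjE)
  assume ch: "is_chain n z" and b: "\<forall>ys. bnd hmul z ys = 0" and n: "1 \<le> n"
  have f: "finite {xs. z xs \<noteq> 0}" using ch by (simp add: is_chain_def)
  have ne: "\<And>xs. xs \<in> Poly_Mapping.keys (fr z) \<Longrightarrow> xs \<noteq> []" using is_chain_fr[OF ch] n by fastforce
  have "Poly_Mapping.lookup (cb (fr z)) ys = 0" for ys
    using bnd_eq[of "fr z" ys, OF ne] b by (simp add: lookup_fr[OF f])
  then show ?thesis by (intro poly_mapping_eqI) simp
qed

lemma cycle_of_frag:
  assumes "Poly_Mapping.keys x \<subseteq> {xs. length xs = n}" "1 \<le> n" "cb x = 0"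
  shows "cycle n (Poly_Mapping.lookup x)"
  unfolding cycle_def
proof (intro conjI allI)
  show "is_chain n (Poly_Mapping.lookup x)" by (rule is_chain_lookup[OF assms(1)])
  fix ys
  have "bnd hmul (Poly_Mapping.lookup x) ys = Poly_Mapping.lookup (cb x) ys"
    using assms(1,2) by (intro bnd_eq) auto
  then show "bnd hmul (Poly_Mapping.lookup x) ys = 0" using assms(3) by simp
qed

lemma homologous_of_hom:
  assumes "hom n (fr z) W" "finite {xs. z xs \<noteq> 0}" "\<And>ys. Poly_Mapping.lookup W ys = w ys"
  shows "homologous n z w"
proof -
  obtain u where u: "Poly_Mapping.keys u \<subseteq> {xs. length xs = Suc n}" "fr z - W = cb u"
    using assms(1) unfolding hom_def by blast
  show ?thesis unfolding homologous_def
  proof (intro exI conjI allI)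
    show "is_chain (Suc n) (Poly_Mapping.lookup u)" using is_chain_lookup[OF u(1)] .
    fix ys
    have "bnd hmul (Poly_Mapping.lookup u) ys = Poly_Mapping.lookup (cb u) ys"
      using u(1) by (intro bnd_eq) auto
    also have "\<dots> = z ys - w ys" using u(2)[symmetric] assms(3) by (simp add: lookup_minus lookup_fr[OF assms(2)])
    finally show "z ys - w ys = bnd hmul (Poly_Mapping.lookup u) ys" by simp
  qed
qed

lemma gen_lookup: "gen xs = Poly_Mapping.lookup (frag_of xs)"
  by (auto simp: gen_def)

lemma A_eq: "A i = Poly_Mapping.lookup (if i = 1 then frag_of [ga] else frag_of [gb])"
  by (simp add: A_def gen_lookup)

lemma B_eq: "B i = Poly_Mapping.lookup (if i = 1 then B1f else B2f)"
  by (auto simp: B_def B1f_def B2f_def gen_lookup lookup_minus)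

lemma C_eq: "C = Poly_Mapping.lookup Cf"
  by (auto simp: C_def Cf_def gen_lookup lookup_minus lookup_add)

lemma cb_B: "cb B1f = 0" "cb B2f = 0"
  by (simp_all add: B1f_def B2f_def cbb2 frag_extend_diff ga_def gb_def gc_def)

lemma keys_single_len: "length xs = n \<Longrightarrow> Poly_Mapping.keys (frag_of xs) \<subseteq> {ys. length ys = n}"
  by simp

section \<open>Homology\<close>

lemma hom_part1: "\<forall>i\<in>{1,2}. cycle 1 (A i)"
proof
  fix i :: nat assume "i \<in> {1,2}"
  show "cycle 1 (A i)" unfolding A_eq
    by (rule cycle_of_frag[where n=1]) (auto simp: cbb1)
qed

lemma hom_part2: "\<forall>z. cycle 1 z \<longrightarrow> (\<exists>m1 m2. homologous 1 z (\<lambda>ys. m1 * A 1 ys + m2 * A 2 ys))"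
proof (intro allI impI)
  fix z assume cz: "cycle 1 z"
  then have ch: "is_chain 1 z" by (simp add: cycle_def)
  then have f: "finite {xs. z xs \<noteq> 0}" by (simp add: is_chain_def)
  have h: "hom 1 (fr z) (frag_cmul (lf (alpha 1) (fr z)) (frag_of [ga]) + frag_cmul (lf (alpha 2) (fr z)) (frag_of [gb]))"
    using H1[OF is_chain_fr[OF ch]] .
  show "\<exists>m1 m2. homologous 1 z (\<lambda>ys. m1 * A 1 ys + m2 * A 2 ys)"
    by (rule exI, rule exI, rule homologous_of_hom[OF h f]) (simp add: A_eq lookup_add)
qed

lemma hom_part3: "\<forall>i\<in>{1,2}. cycle 2 (B i)"
proof
  fix i :: nat assume "i \<in> {1,2}"
  show "cycle 2 (B i)" unfolding B_eq
    by (rule cycle_of_frag[where n=2]) (use keys_B cb_B in auto)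
qed

lemma hom_part4: "\<forall>z. cycle 2 z \<longrightarrow> (\<exists>m1 m2. homologous 2 z (\<lambda>ys. m1 * B 1 ys + m2 * B 2 ys))"
proof (intro allI impI)
  fix z assume cz: "cycle 2 z"
  then have ch: "is_chain 2 z" by (simp add: cycle_def)
  then have f: "finite {xs. z xs \<noteq> 0}" by (simp add: is_chain_def)
  have h: "hom 2 (fr z) (frag_cmul (lf (beta 1) (fr z)) B1f + frag_cmul (lf (beta 2) (fr z)) B2f)"
    using H2[OF is_chain_fr[OF ch] cycle_cb[OF cz]] by simp
  show "\<exists>m1 m2. homologous 2 z (\<lambda>ys. m1 * B 1 ys + m2 * B 2 ys)"
    by (rule exI, rule exI, rule homologous_of_hom[OF h f]) (simp add: B_eq lookup_add)
qed

lemma hom_part5: "cycle 3 C"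
  unfolding C_eq by (rule cycle_of_frag[where n=3]) (use keys_Cf cb_Cf in auto)

lemma hom_part6: "\<forall>z. cycle 3 z \<longrightarrow> (\<exists>m. homologous 3 z (\<lambda>ys. m * C ys))"
proof (intro allI impI)
  fix z assume cz: "cycle 3 z"
  then have ch: "is_chain 3 z" by (simp add: cycle_def)
  then have f: "finite {xs. z xs \<noteq> 0}" by (simp add: is_chain_def)
  have h: "hom 3 (fr z) (frag_cmul (lf gamma (fr z)) Cf)"
    using H3[OF is_chain_fr[OF ch] cycle_cb[OF cz]] by simp
  show "\<exists>m. homologous 3 z (\<lambda>ys. m * C ys)"
    by (rule exI[of _ "lf gamma (fr z)"], rule homologous_of_hom[OF h f]) (simp add: C_eq)
qed

section \<open>Cohomology\<close>

lemma lf_single: "lf \<phi> (frag_of [x]) = \<phi> [x]" by simp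

lemma coh_part1: "\<forall>\<phi>. cocycle 1 \<phi> \<longrightarrow> (\<exists>m1 m2. cohomologous 1 \<phi> (\<lambda>xs. m1 * alpha 1 xs + m2 * alpha 2 xs))"
proof (intro allI impI)
  fix \<phi> assume cp: "cocycle 1 \<phi>"
  show "\<exists>m1 m2. cohomologous 1 \<phi> (\<lambda>xs. m1 * alpha 1 xs + m2 * alpha 2 xs)"
  proof (intro exI)
    show "cohomologous 1 \<phi> (\<lambda>xs. \<phi> [ga] * alpha 1 xs + \<phi> [gb] * alpha 2 xs)"
      unfolding cohomologous_def
    proof (intro exI allI impI)
      fix xs :: "heis list" assume "length xs = 1"
      then obtain x where xs: "xs = [x]" by (cases xs) auto
      have "hom 1 (frag_of [x]) (frag_cmul (alpha 1 [x]) (frag_of [ga]) + frag_cmul (alpha 2 [x]) (frag_of [gb]))"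
        using H1[of "frag_of [x]"] by simp
      from hom_lf[OF cp this] have "\<phi> [x] = alpha 1 [x] * \<phi> [ga] + alpha 2 [x] * \<phi> [gb]" by simp
      moreover have "cobd hmul (\<lambda>_. 0) [x] = 0" by (simp add: cobd_def)
      ultimately show "\<phi> xs - (\<phi> [ga] * alpha 1 xs + \<phi> [gb] * alpha 2 xs) = cobd hmul (\<lambda>_. 0) xs"
        by (simp add: xs)
    qed
  qed
qed

definition R1 :: "heis \<Rightarrow> heis list \<Rightarrow>\<^sub>0 int" where
  "R1 x = frag_of [x] - frag_cmul (alpha 1 [x]) (frag_of [ga]) - frag_cmul (alpha 2 [x]) (frag_of [gb])"

lemma T1_ex: "\<exists>t. Poly_Mapping.keys t \<subseteq> {xs. length xs = 2} \<and> cb t = R1 x \<and> lf (beta 1) t = 0 \<and> lf (beta 2) t = 0"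
proof -
  have "hom 1 (frag_of [x]) (frag_cmul (alpha 1 [x]) (frag_of [ga]) + frag_cmul (alpha 2 [x]) (frag_of [gb]))"
    using H1[of "frag_of [x]"] by simp
  then obtain u where u: "Poly_Mapping.keys u \<subseteq> {xs. length xs = 2}"
     "frag_of [x] - (frag_cmul (alpha 1 [x]) (frag_of [ga]) + frag_cmul (alpha 2 [x]) (frag_of [gb])) = cb u"
    unfolding hom_def by (auto simp: numeral_2_eq_2)
  have b: "lf (beta 1) B1f = 1" "lf (beta 2) B1f = 0" "lf (beta 1) B2f = 0" "lf (beta 2) B2f = 1"
    by (simp_all add: B1f_def B2f_def beta_def ga_def gb_def gc_def h1_def h2_def h3_def)
  let ?t = "u - frag_cmul (lf (beta 1) u) B1f - frag_cmul (lf (beta 2) u) B2f"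
  have "Poly_Mapping.keys ?t \<subseteq> {xs. length xs = 2}"
    using keys_B u(1) keys_cmul by (intro keys_diff3) (auto intro: order_trans[OF keys_cmul])
  moreover have "cb ?t = R1 x"
  proof -
    have "cb ?t = cb u" by (simp add: frag_extend_diff frag_extend_cmul cb_B)
    also have "\<dots> = R1 x" using u(2) by (simp add: R1_def algebra_simps)
    finally show ?thesis .
  qed
  moreover have "lf (beta 1) ?t = 0" "lf (beta 2) ?t = 0" using b by (simp_all del: One_nat_def)
  ultimately show ?thesis by blast
qed

definition T1 :: "heis \<Rightarrow> heis list \<Rightarrow>\<^sub>0 int" where
  "T1 x = (SOME t. Poly_Mapping.keys t \<subseteq> {xs. length xs = 2} \<and> cb t = R1 x \<and> lf (beta 1) t = 0 \<and> lf (beta 2) t = 0)"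

lemma T1: "Poly_Mapping.keys (T1 x) \<subseteq> {xs. length xs = 2}" "cb (T1 x) = R1 x"
  "lf (beta 1) (T1 x) = 0" "lf (beta 2) (T1 x) = 0"
  using someI_ex[OF T1_ex[of x]] unfolding T1_def by blast+

definition R2 :: "heis \<Rightarrow> heis \<Rightarrow> heis list \<Rightarrow>\<^sub>0 int" where
  "R2 x y = frag_of [x,y] - frag_cmul (beta 1 [x,y]) B1f - frag_cmul (beta 2 [x,y]) B2f
            - (T1 y - T1 (hmul x y) + T1 x)"

lemma alpha_hmul: "alpha i [hmul x y] = alpha i [x] + alpha i [y]"
  by (simp add: alpha_def)

lemma R2_props: "Poly_Mapping.keys (R2 x y) \<subseteq> {xs. length xs = 2}" "cb (R2 x y) = 0"
   "lf (beta 1) (R2 x y) = 0" "lf (beta 2) (R2 x y) = 0"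
proof -
  show "Poly_Mapping.keys (R2 x y) \<subseteq> {xs. length xs = 2}"
    unfolding R2_def using keys_B T1
    by (intro keys_diff3 keys_add_sub) (auto intro: order_trans[OF keys_cmul])
  show "cb (R2 x y) = 0"
    by (simp add: R2_def frag_extend_diff frag_extend_add frag_extend_cmul cb_B T1 cbb2 R1_def
        alpha_hmul frag_cmul_distrib algebra_simps)
  have b: "lf (beta 1) B1f = 1" "lf (beta 2) B1f = 0" "lf (beta 1) B2f = 0" "lf (beta 2) B2f = 1"
    by (simp_all add: B1f_def B2f_def beta_def ga_def gb_def gc_def h1_def h2_def h3_def)
  show "lf (beta 1) (R2 x y) = 0" "lf (beta 2) (R2 x y) = 0"
    by (simp_all add: R2_def b T1 del: One_nat_def)
qed

lemma R2_hom: "hom 2 (R2 x y) 0"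
  using H2[OF R2_props(1) R2_props(2)] by (simp add: R2_props(3,4) del: One_nat_def)

lemma coh_part2: "\<forall>\<phi>. cocycle 2 \<phi> \<longrightarrow> (\<exists>m1 m2. cohomologous 2 \<phi> (\<lambda>xs. m1 * beta 1 xs + m2 * beta 2 xs))"
proof (intro allI impI)
  fix \<phi> assume cp: "cocycle 2 \<phi>"
  show "\<exists>m1 m2. cohomologous 2 \<phi> (\<lambda>xs. m1 * beta 1 xs + m2 * beta 2 xs)"
  proof (intro exI)
    show "cohomologous 2 \<phi> (\<lambda>xs. lf \<phi> B1f * beta 1 xs + lf \<phi> B2f * beta 2 xs)"
      unfolding cohomologous_def
    proof (intro exI allI impI)
      fix xs :: "heis list" assume "length xs = 2"
      from len2[OF this] obtain x y where xs: "xs = [x,y]" by blast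
      have "lf \<phi> (R2 x y) = 0" using hom_lf[OF cp R2_hom] by simp
      then show "\<phi> xs - (lf \<phi> B1f * beta 1 xs + lf \<phi> B2f * beta 2 xs)
           = cobd hmul (\<lambda>ys. lf \<phi> (T1 (hd ys))) xs"
        by (simp add: xs cobd2 R2_def algebra_simps)
    qed
  qed
qed

lemma T2_ex: "\<exists>t. Poly_Mapping.keys t \<subseteq> {xs. length xs = 3} \<and> cb t = R2 x y \<and> lf gamma t = 0"
proof -
  obtain u where u: "Poly_Mapping.keys u \<subseteq> {xs. length xs = 3}" "R2 x y - 0 = cb u"
    using R2_hom[of x y] unfolding hom_def by (auto simp: numeral_3_eq_3)
  let ?t = "u - frag_cmul (lf gamma u) Cf"
  have "Poly_Mapping.keys ?t \<subseteq> {xs. length xs = 3}"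
    using keys_Cf u(1) by (intro keys_diff3) (auto intro: order_trans[OF keys_cmul])
  moreover have "cb ?t = R2 x y" using u(2) by (simp add: frag_extend_diff frag_extend_cmul cb_Cf)
  moreover have "lf gamma ?t = 0" by (simp add: gamma_Cf)
  ultimately show ?thesis by blast
qed

definition T2 :: "heis \<Rightarrow> heis \<Rightarrow> heis list \<Rightarrow>\<^sub>0 int" where
  "T2 x y = (SOME t. Poly_Mapping.keys t \<subseteq> {xs. length xs = 3} \<and> cb t = R2 x y \<and> lf gamma t = 0)"

lemma T2: "Poly_Mapping.keys (T2 x y) \<subseteq> {xs. length xs = 3}" "cb (T2 x y) = R2 x y" "lf gamma (T2 x y) = 0"
  using someI_ex[OF T2_ex[of x y]] unfolding T2_def by blast+

definition R3 :: "heis \<Rightarrow> heis \<Rightarrow> heis \<Rightarrow> heis list \<Rightarrow>\<^sub>0 int" where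
  "R3 x y z = frag_of [x,y,z] - frag_cmul (gamma [x,y,z]) Cf
     - (T2 y z - T2 (hmul x y) z + T2 x (hmul y z) - T2 x y)"

lemma R3_props: "Poly_Mapping.keys (R3 x y z) \<subseteq> {xs. length xs = 3}" "cb (R3 x y z) = 0"
   "lf gamma (R3 x y z) = 0"
proof -
  show "Poly_Mapping.keys (R3 x y z) \<subseteq> {xs. length xs = 3}"
    unfolding R3_def using keys_Cf T2
    by (intro keys_diff3 keys_add_sub) (auto intro: order_trans[OF keys_cmul])
  have c1: "cobd hmul (beta 1) [x,y,z] = 0" "cobd hmul (beta 2) [x,y,z] = 0"
    using beta_cocycle[of 1] beta_cocycle[of 2] by (auto simp: cocycle_def)
  have e: "R2 y z - R2 (hmul x y) z + R2 x (hmul y z) - R2 x y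
     = cbb [x,y,z] - frag_cmul (cobd hmul (beta 1) [x,y,z]) B1f - frag_cmul (cobd hmul (beta 2) [x,y,z]) B2f"
    by (simp add: R2_def cbb3 cobd3 hmul_assoc frag_cmul_distrib frag_cmul_diff_distrib algebra_simps)
  show "cb (R3 x y z) = 0"
    unfolding R3_def using e c1
    by (simp add: frag_extend_diff frag_extend_add frag_extend_cmul cb_Cf T2)
  show "lf gamma (R3 x y z) = 0"
    by (simp add: R3_def gamma_Cf T2)
qed

lemma R3_hom: "hom 3 (R3 x y z) 0"
  using H3[OF R3_props(1) R3_props(2)] by (simp add: R3_props(3))

lemma coh3_gen: "cocycle 3 \<phi> \<Longrightarrow> cohomologous 3 \<phi> (\<lambda>xs. lf \<phi> Cf * gamma xs)"
  unfolding cohomologous_def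
proof (intro exI allI impI)
  assume cp: "cocycle 3 \<phi>"
  fix xs :: "heis list" assume "length xs = 3"
  from len3[OF this] obtain x y z where xs: "xs = [x,y,z]" by blast
  have "lf \<phi> (R3 x y z) = 0" using hom_lf[OF cp R3_hom] by simp
  then show "\<phi> xs - lf \<phi> Cf * gamma xs = cobd hmul (\<lambda>ys. lf \<phi> (T2 (ys ! 0) (ys ! 1))) xs"
    by (simp add: xs cobd3 R3_def algebra_simps)
qed

lemma coh_part3: "\<forall>\<phi>. cocycle 3 \<phi> \<longrightarrow> (\<exists>m. cohomologous 3 \<phi> (\<lambda>xs. m * gamma xs))"
  using coh3_gen by blast

lemma cup_part1: "cohomologous 2 (cup 1 (alpha 1) (alpha 2)) (\<lambda>xs. 0)"
  unfolding cohomologous_def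
proof (intro exI allI impI)
  fix xs :: "heis list" assume "length xs = 2"
  from len2[OF this] obtain x y where xs: "xs = [x,y]" by blast
  show "cup 1 (alpha 1) (alpha 2) xs - 0 = cobd hmul (\<lambda>ys. h3 (ys ! 0) - h1 (ys ! 0) * h2 (ys ! 0)) xs"
    by (simp add: xs cobd2 cup_def alpha_def algebra_simps)
qed

lemma cup_vals: "i \<in> {1,2} \<Longrightarrow> j \<in> {1,2} \<Longrightarrow> lf (cup 2 (beta i) (alpha j)) Cf = (if i = j then 0 else 1)"
  by (auto simp: Cf_def cup_def beta_def alpha_def h1_def h2_def h3_def numeral_2_eq_2)

lemma cup_part2: "\<forall>i\<in>{1,2}. \<forall>j\<in>{1,2}.
      cohomologous 3 (cup 2 (beta i) (alpha j)) (\<lambda>xs. (if i = j then 0 else 1) * gamma xs)"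
proof (intro ballI)
  fix i j :: nat assume i: "i \<in> {1,2}" and j: "j \<in> {1,2}"
  show "cohomologous 3 (cup 2 (beta i) (alpha j)) (\<lambda>xs. (if i = j then 0 else 1) * gamma xs)"
    using coh3_gen[OF cup_cocycle[OF i, of j]] cup_vals[OF i j] by simp
qed

theorem propositionA2:
  shows
  \<comment> \<open>(i) H^1\<close>
  "(\<forall>i\<in>{1,2}. cocycle 1 (alpha i)) \<and>
   (\<forall>\<phi>. cocycle 1 \<phi> \<longrightarrow> (\<exists>m1 m2. cohomologous 1 \<phi> (\<lambda>xs. m1 * alpha 1 xs + m2 * alpha 2 xs))) \<and>
   \<comment> \<open>(ii) H^2\<close>
   (\<forall>i\<in>{1,2}. cocycle 2 (beta i)) \<and>
   (\<forall>\<phi>. cocycle 2 \<phi> \<longrightarrow> (\<exists>m1 m2. cohomologous 2 \<phi> (\<lambda>xs. m1 * beta 1 xs + m2 * beta 2 xs))) \<and>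
   \<comment> \<open>(iii) H^3\<close>
   cocycle 3 gamma \<and>
   (\<forall>\<phi>. cocycle 3 \<phi> \<longrightarrow> (\<exists>m. cohomologous 3 \<phi> (\<lambda>xs. m * gamma xs))) \<and>
   \<comment> \<open>(iv) cup products\<close>
   cohomologous 2 (cup 1 (alpha 1) (alpha 2)) (\<lambda>xs. 0) \<and>
   (\<forall>i\<in>{1,2}. \<forall>j\<in>{1,2}.
      cohomologous 3 (cup 2 (beta i) (alpha j)) (\<lambda>xs. (if i = j then 0 else 1) * gamma xs)) \<and>
   \<comment> \<open>(v) homology\<close>
   (\<forall>i\<in>{1,2}. cycle 1 (A i)) \<and>
   (\<forall>z. cycle 1 z \<longrightarrow> (\<exists>m1 m2. homologous 1 z (\<lambda>ys. m1 * A 1 ys + m2 * A 2 ys))) \<and>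
   (\<forall>i\<in>{1,2}. cycle 2 (B i)) \<and>
   (\<forall>z. cycle 2 z \<longrightarrow> (\<exists>m1 m2. homologous 2 z (\<lambda>ys. m1 * B 1 ys + m2 * B 2 ys))) \<and>
   cycle 3 C \<and>
   (\<forall>z. cycle 3 z \<longrightarrow> (\<exists>m. homologous 3 z (\<lambda>ys. m * C ys)))"
    using alpha_cocycle coh_part1 beta_cocycle coh_part2 gamma_cocycle coh_part3 cup_part1 cup_part2
    hom_part1 hom_part2 hom_part3 hom_part4 hom_part5 hom_part6
  by blast

end
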